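(* Let $\pi$ be a qlg-$2$-sortable permutation. Then: (i) $\pi$ avoids the pattern $3214$; (ii) every occurrence of the pattern $52314$ in $\pi$ can be extended to an occurrence of one of the following patterns, where the dotted entries are the additional entries and the undotted entries form the given occurrence of $52314$: $63\dot{1}425$; $7\dot{2}\dot{1}4536$; $7\dot{3}\dot{1}4526$; $\dot{7}\dot{2}8\dot{1}4536$; $\dot{7}\dot{3}8\dot{1}4526$; $\dot{8}\dot{2}7\dot{1}4536$; $\dot{8}\dot{3}7\dot{1}4526$.
   Context: The $\mathfrak{D}^2\mathfrak{I}$ machine consists of two decreasing stacks $D_1,D_2$ followed in series by an increasing stack $I$. Elements of $D_1,D_2$ must be in decreasing order from top to bottom (top largest); elements of $I$ in increasing order from top to bottom (top smallest). Operations: $d_0$ pushes the next input element into $D_1$; $d_1$ moves the top of $D_1$ to $D_2$; $d_2$ moves the top of $D_2$ to $I$; $d_3$ pops the top of $I$ and appends it to the output. An operation is legal if it respects the stack restrictions; $d_3$ is legal if the popped element is the smallest among the elements not yet output, and also if no other operation is legal. The quasi left-greedy procedure performs at each step the first legal operation in the priority order $d_3\rhd d_1\rhd d_0\rhd d_2$. A permutation is qlg-$2$-sortable if this procedure outputs its elements in increasing order. An occurrence of a pattern with dotted entries extending a given occurrence of $52314$ means a set of entries of $\pi$ forming an occurrence of the full pattern, in which the entries corresponding to the undotted positions are exactly the given occurrence of $52314$. *)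

theory Defs
  imports Main
begin

text \<open>Permutations are lists of naturals with values exactly 1..n.
  Stacks are lists whose head is the top. A machine state is
  (remaining input, D1, D2, I, output so far).\<close>

definition is_perm :: "nat list \<Rightarrow> bool" where
  "is_perm p \<longleftrightarrow> distinct p \<and> set p = {1..length p}"

type_synonym mstate = "nat list \<times> nat list \<times> nat list \<times> nat list \<times> nat list"

definition d0_legal :: "mstate \<Rightarrow> bool" where
  "d0_legal s = (case s of (inp, d1, d2, i, out) \<Rightarrow>
      inp \<noteq> [] \<and> (d1 = [] \<or> hd inp > hd d1))"

definition d1_legal :: "mstate \<Rightarrow> bool" where
  "d1_legal s = (case s of (inp, d1, d2, i, out) \<Rightarrow>
      d1 \<noteq> [] \<and> (d2 = [] \<or> hd d1 > hd d2))"

definition d2_legal :: "mstate \<Rightarrow> bool" where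
  "d2_legal s = (case s of (inp, d1, d2, i, out) \<Rightarrow>
      d2 \<noteq> [] \<and> (i = [] \<or> hd d2 < hd i))"

definition d3_legal :: "mstate \<Rightarrow> bool" where
  "d3_legal s = (case s of (inp, d1, d2, i, out) \<Rightarrow>
      i \<noteq> [] \<and> (hd i = Min (set (inp @ d1 @ d2 @ i))
                  \<or> \<not> (d0_legal s \<or> d1_legal s \<or> d2_legal s)))"

definition qlg_step :: "mstate \<Rightarrow> mstate" where
  "qlg_step s = (case s of (inp, d1, d2, i, out) \<Rightarrow>
     if d3_legal s then (inp, d1, d2, tl i, out @ [hd i])
     else if d1_legal s then (inp, tl d1, hd d1 # d2, i, out)
     else if d0_legal s then (tl inp, hd inp # d1, d2, i, out)
     else if d2_legal s then (inp, d1, tl d2, hd d2 # i, out)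
     else s)"

text \<open>Each element undergoes exactly four operations, so after 4n steps the
  procedure has terminated.\<close>
definition qlg_output :: "nat list \<Rightarrow> nat list" where
  "qlg_output p = (let (_, _, _, _, out) = (qlg_step ^^ (4 * length p)) (p, [], [], [], []) in out)"

definition qlg2_sortable :: "nat list \<Rightarrow> bool" where
  "qlg2_sortable p \<longleftrightarrow> is_perm p \<and> qlg_output p = sort p"

definition occurrence :: "nat list \<Rightarrow> nat list \<Rightarrow> nat list \<Rightarrow> bool" where
  "occurrence p q js \<longleftrightarrow> length js = length q \<and> sorted_wrt (<) js \<and>
     (\<forall>j\<in>set js. j < length p) \<and>
     (\<forall>a<length q. \<forall>b<length q. (p ! (js ! a) < p ! (js ! b)) \<longleftrightarrow> (q ! a < q ! b))"

definition contains :: "nat list \<Rightarrow> nat list \<Rightarrow> bool" where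
  "contains p q \<longleftrightarrow> (\<exists>js. occurrence p q js)"

text \<open>Extension of a given occurrence: a pattern q together with the list U of
  its undotted positions; the undotted entries are exactly the given occurrence.\<close>
definition extends_to :: "nat list \<Rightarrow> nat list \<Rightarrow> nat list \<times> nat list \<Rightarrow> bool" where
  "extends_to p is qU \<longleftrightarrow> (\<exists>js. occurrence p (fst qU) js \<and> map (\<lambda>u. js ! u) (snd qU) = is)"

definition ext_patterns :: "(nat list \<times> nat list) list" where
  "ext_patterns =
    [ ([6,3,1,4,2,5], [0,1,3,4,5]),
      ([7,2,1,4,5,3,6], [0,3,4,5,6]),
      ([7,3,1,4,5,2,6], [0,3,4,5,6]),
      ([7,2,8,1,4,5,3,6], [2,4,5,6,7]),
      ([7,3,8,1,4,5,2,6], [2,4,5,6,7]),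
      ([8,2,7,1,4,5,3,6], [2,4,5,6,7]),
      ([8,3,7,1,4,5,2,6], [2,4,5,6,7]) ]"

end

theory Submission
  imports Defs
begin


definition kind :: "mstate \<Rightarrow> nat" where
 "kind s = (if d3_legal s then 3 else if d1_legal s then 1 else if d0_legal s then 0
            else if d2_legal s then 2 else 4)"

lemma kind_cases: "kind s \<in> {0,1,2,3,4}" by (auto simp: kind_def)

lemma step3: "kind (inp,d1,d2,i,out) = 3 \<Longrightarrow>
   qlg_step (inp,d1,d2,i,out) = (inp,d1,d2,tl i, out @ [hd i]) \<and> i \<noteq> []"
  by (auto simp: kind_def qlg_step_def d3_legal_def split: if_splits)

lemma step1: "kind (inp,d1,d2,i,out) = 1 \<Longrightarrow>
   qlg_step (inp,d1,d2,i,out) = (inp,tl d1, hd d1 # d2, i, out) \<and> d1 \<noteq> [] \<and> (d2 = [] \<or> hd d2 < hd d1)"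
  by (auto simp: kind_def qlg_step_def d1_legal_def split: if_splits)

lemma step0: "kind (inp,d1,d2,i,out) = 0 \<Longrightarrow>
   qlg_step (inp,d1,d2,i,out) = (tl inp, hd inp # d1, d2, i, out) \<and> inp \<noteq> [] \<and> (d1 = [] \<or> hd d1 < hd inp)
   \<and> \<not> d1_legal (inp,d1,d2,i,out)"
  by (auto simp: kind_def qlg_step_def d0_legal_def split: if_splits)

lemma step2: "kind (inp,d1,d2,i,out) = 2 \<Longrightarrow>
   qlg_step (inp,d1,d2,i,out) = (inp, d1, tl d2, hd d2 # i, out) \<and> d2 \<noteq> [] \<and> (i = [] \<or> hd d2 < hd i)
   \<and> \<not> d1_legal (inp,d1,d2,i,out) \<and> \<not> d0_legal (inp,d1,d2,i,out)"
  by (auto simp: kind_def qlg_step_def d2_legal_def split: if_splits)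

lemma step4: "kind s = 4 \<Longrightarrow> qlg_step s = s \<and> \<not> d1_legal s \<and> \<not> d0_legal s"
  by (auto simp: kind_def qlg_step_def split: if_splits prod.splits)

lemma not_d1_legal: "\<not> d1_legal (inp,d1,d2,i,out) \<longleftrightarrow> d1 = [] \<or> (d2 \<noteq> [] \<and> hd d1 < hd d2 \<or> d2 \<noteq> [] \<and> hd d1 = hd d2)"
  by (auto simp: d1_legal_def)

lemma not_d0_legal: "\<not> d0_legal (inp,d1,d2,i,out) \<longleftrightarrow> inp = [] \<or> (d1 \<noteq> [] \<and> hd inp \<le> hd d1)"
  by (auto simp: d0_legal_def)

definition Wf :: "nat list \<Rightarrow> mstate \<Rightarrow> bool" where
 "Wf p s = (case s of (inp,d1,d2,i,out) \<Rightarrow> distinct (inp@d1@d2@i@out) \<and> set (inp@d1@d2@i@out) = set p \<and>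
    sorted_wrt (>) d1 \<and> sorted_wrt (>) d2 \<and> sorted_wrt (<) i \<and> (\<exists>k. inp = drop k p))"

lemma hd_max: "sorted_wrt (>) xs \<Longrightarrow> y \<in> set xs \<Longrightarrow> y \<le> (hd xs::nat)"
  by (cases xs) auto

lemma hd_min: "sorted_wrt (<) xs \<Longrightarrow> y \<in> set xs \<Longrightarrow> hd xs \<le> (y::nat)"
  by (cases xs) auto

lemma Wf_step: assumes "Wf p s" shows "Wf p (qlg_step s)"
proof -
  obtain inp d1 d2 i out where s: "s = (inp,d1,d2,i,out)" by (cases s) auto
  have W: "distinct (inp@d1@d2@i@out)" "set (inp@d1@d2@i@out) = set p" "sorted_wrt (>) d1" "sorted_wrt (>) d2"
     "sorted_wrt (<) i" "\<exists>k. inp = drop k p"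
    using assms by (auto simp: Wf_def s)
  have "kind s \<in> {0,1,2,3,4}" by (rule kind_cases)
  then show ?thesis
  proof (elim insertE emptyE)
    assume k: "kind s = 0"
    from step0[OF k[unfolded s]] have st: "qlg_step s = (tl inp, hd inp # d1, d2, i, out)"
      and ne: "inp \<noteq> []" "d1 = [] \<or> hd d1 < hd inp" by (auto simp: s)
    obtain k where "inp = drop k p" using W by auto
    then have "tl inp = drop (Suc k) p" by (simp add: drop_Suc tl_drop)
    moreover have "sorted_wrt (>) (hd inp # d1)" using W(3) ne(2) hd_max[OF W(3)]
      by (cases d1) (auto)
    moreover have "distinct (tl inp @ (hd inp # d1) @ d2 @ i @ out) \<and> set (tl inp @ (hd inp # d1) @ d2 @ i @ out) = set p"
      using W(1,2) ne(1) by (cases inp) auto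
    ultimately show ?thesis using W st by (auto simp: Wf_def)
  next
    assume k: "kind s = 1"
    from step1[OF k[unfolded s]] have st: "qlg_step s = (inp, tl d1, hd d1 # d2, i, out)"
      and ne: "d1 \<noteq> []" "d2 = [] \<or> hd d2 < hd d1" by (auto simp: s)
    have "sorted_wrt (>) (hd d1 # d2)" using W(4) ne(2) hd_max[OF W(4)]
      by (cases d2) (auto)
    moreover have "sorted_wrt (>) (tl d1)" using W(3) ne by (cases d1) auto
    moreover have "distinct (inp @ tl d1 @ (hd d1 # d2) @ i @ out) \<and> set (inp @ tl d1 @ (hd d1 # d2) @ i @ out) = set p"
      using W(1,2) ne(1) by (cases d1) auto
    ultimately show ?thesis using W st by (auto simp: Wf_def)
  next
    assume k: "kind s = 2"
    from step2[OF k[unfolded s]] have st: "qlg_step s = (inp, d1, tl d2, hd d2 # i, out)"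
      and ne: "d2 \<noteq> []" "i = [] \<or> hd d2 < hd i" by (auto simp: s)
    have "sorted_wrt (<) (hd d2 # i)" using W(5) ne(2) hd_min[OF W(5)]
      by (cases i) (auto)
    moreover have "sorted_wrt (>) (tl d2)" using W(4) ne by (cases d2) auto
    moreover have "distinct (inp @ d1 @ tl d2 @ (hd d2 # i) @ out) \<and> set (inp @ d1 @ tl d2 @ (hd d2 # i) @ out) = set p"
      using W(1,2) ne(1) by (cases d2) auto
    ultimately show ?thesis using W st by (auto simp: Wf_def)
  next
    assume k: "kind s = 3"
    from step3[OF k[unfolded s]] have st: "qlg_step s = (inp, d1, d2, tl i, out @ [hd i])"
      and ne: "i \<noteq> []" by (auto simp: s)
    have "sorted_wrt (<) (tl i)" using W(5) ne by (cases i) auto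
    moreover have "distinct (inp @ d1 @ d2 @ tl i @ out @ [hd i]) \<and> set (inp @ d1 @ d2 @ tl i @ out @ [hd i]) = set p"
      using W(1,2) ne(1) by (cases i) auto
    ultimately show ?thesis using W st by (auto simp: Wf_def)
  next
    assume "kind s = 4" then show ?thesis using step4 assms by auto
  qed
qed

definition rank :: "mstate \<Rightarrow> nat \<Rightarrow> nat" where
 "rank s e = (case s of (inp,d1,d2,i,out) \<Rightarrow> if e \<in> set inp then 0 else if e \<in> set d1 then 1
     else if e \<in> set d2 then 2 else if e \<in> set i then 3 else 4)"

definition mover :: "mstate \<Rightarrow> nat" where
 "mover s = (case s of (inp,d1,d2,i,out) \<Rightarrow> if kind s = 0 then hd inp else if kind s = 1 then hd d1
     else if kind s = 2 then hd d2 else hd i)"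

lemma rank_step: assumes "Wf p s" "kind s \<noteq> 4"
  shows "rank (qlg_step s) e = (if e = mover s then Suc (rank s e) else rank s e)"
    "rank s (mover s) = kind s"
proof -
  obtain inp d1 d2 i out where s: "s = (inp,d1,d2,i,out)" by (cases s) auto
  have D: "distinct (inp@d1@d2@i@out)" using assms by (auto simp: Wf_def s)
  have "kind s \<in> {0,1,2,3}" using kind_cases[of s] assms(2) by auto
  then have "rank (qlg_step s) e = (if e = mover s then Suc (rank s e) else rank s e) \<and> rank s (mover s) = kind s"
  proof (elim insertE emptyE)
    assume k: "kind s = 0"
    from step0[OF k[unfolded s]] have st: "qlg_step (inp,d1,d2,i,out) = (tl inp, hd inp # d1, d2, i, out)"
      and ne: "inp \<noteq> []" by auto
    show ?thesis using D ne k unfolding s st by (cases inp) (auto simp: rank_def mover_def)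
  next
    assume k: "kind s = 1"
    from step1[OF k[unfolded s]] have st: "qlg_step (inp,d1,d2,i,out) = (inp, tl d1, hd d1 # d2, i, out)"
      and ne: "d1 \<noteq> []" by auto
    show ?thesis using D ne k unfolding s st by (cases d1) (auto simp: rank_def mover_def)
  next
    assume k: "kind s = 2"
    from step2[OF k[unfolded s]] have st: "qlg_step (inp,d1,d2,i,out) = (inp, d1, tl d2, hd d2 # i, out)"
      and ne: "d2 \<noteq> []" by auto
    show ?thesis using D ne k unfolding s st by (cases d2) (auto simp: rank_def mover_def)
  next
    assume k: "kind s = 3"
    from step3[OF k[unfolded s]] have st: "qlg_step (inp,d1,d2,i,out) = (inp, d1, d2, tl i, out @ [hd i])"
      and ne: "i \<noteq> []" by auto
    show ?thesis using D ne k unfolding s st by (cases i) (auto simp: rank_def mover_def)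
  qed
  then show "rank (qlg_step s) e = (if e = mover s then Suc (rank s e) else rank s e)"
    "rank s (mover s) = kind s" by auto
qed

lemma rank_step4: "kind s = 4 \<Longrightarrow> rank (qlg_step s) e = rank s e"
  using step4 by auto

definition INP :: "mstate \<Rightarrow> nat list" where "INP s = fst s"
definition DA :: "mstate \<Rightarrow> nat list" where "DA s = fst (snd s)"
definition DB :: "mstate \<Rightarrow> nat list" where "DB s = fst (snd (snd s))"
definition II :: "mstate \<Rightarrow> nat list" where "II s = fst (snd (snd (snd s)))"
definition OUT :: "mstate \<Rightarrow> nat list" where "OUT s = snd (snd (snd (snd s)))"

lemma sel_simps[simp]: "INP (a,b,c,d,e) = a" "DA (a,b,c,d,e) = b" "DB (a,b,c,d,e) = c"
  "II (a,b,c,d,e) = d" "OUT (a,b,c,d,e) = e"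
  by (auto simp: INP_def DA_def DB_def II_def OUT_def)

lemma state_eq: "s = (INP s, DA s, DB s, II s, OUT s)"
  by (cases s) auto

lemma rank_iff: assumes "Wf p s" "e \<in> set p"
  shows "rank s e = 0 \<longleftrightarrow> e \<in> set (INP s)"
   "rank s e = 1 \<longleftrightarrow> e \<in> set (DA s)"
   "rank s e = 2 \<longleftrightarrow> e \<in> set (DB s)"
   "rank s e = 3 \<longleftrightarrow> e \<in> set (II s)"
   "rank s e = 4 \<longleftrightarrow> e \<in> set (OUT s)"
  using assms by (cases s; auto simp: rank_def Wf_def)+

lemma rank_le4: "rank s e \<le> 4" by (cases s) (auto simp: rank_def)

lemma set_tl_iff: "distinct xs \<Longrightarrow> xs \<noteq> [] \<Longrightarrow> x \<in> set (tl xs) \<longleftrightarrow> (x \<in> set xs \<and> x \<noteq> hd xs)"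
  by (cases xs) auto

lemma out_step: "\<exists>r. OUT (qlg_step s) = OUT s @ r"
proof -
  obtain inp d1 d2 i out where s: "s = (inp,d1,d2,i,out)" by (cases s) auto
  show ?thesis using kind_cases[of s] step0[of inp d1 d2 i out] step1[of inp d1 d2 i out]
      step2[of inp d1 d2 i out] step3[of inp d1 d2 i out] step4[of s]
    by (auto simp: s)
qed

definition DeadCfg :: "nat \<Rightarrow> nat \<Rightarrow> nat \<Rightarrow> mstate \<Rightarrow> bool" where
"DeadCfg c x y s = (c \<in> set (II s) \<and> x < c \<and> c < y \<and>
  ((x \<in> set (DA s) \<and> y \<in> set (DA s)) \<or> (x \<in> set (DA s) \<and> y \<in> set (DB s)) \<or>
   (x \<in> set (DB s) \<and> y \<in> set (DB s)) \<or>
   (x \<in> set (DB s) \<and> DA s \<noteq> [] \<and> y = hd (DA s) \<and> hd (DB s) < y)))"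

lemma dead_step: assumes "Wf p s" "DeadCfg c x y s" "kind s = 3 \<Longrightarrow> hd (II s) \<noteq> c"
  shows "DeadCfg c x y (qlg_step s)"
proof -
  obtain inp d1 d2 i out where s: "s = (inp,d1,d2,i,out)" by (cases s) auto
  have W: "distinct (inp@d1@d2@i@out)" "sorted_wrt (>) d1" "sorted_wrt (>) d2"
     "sorted_wrt (<) i"
    using assms by (auto simp: Wf_def s)
  have D: "DeadCfg c x y (inp,d1,d2,i,out)" using assms(2) s by simp
  have "kind s \<in> {0,1,2,3,4}" by (rule kind_cases)
  then show ?thesis
  proof (elim insertE emptyE)
    assume k: "kind s = 0"
    from step0[OF k[unfolded s]] have st: "qlg_step (inp,d1,d2,i,out) = (tl inp, hd inp # d1, d2, i, out)"
      and nl: "\<not> d1_legal (inp,d1,d2,i,out)" by auto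
    show ?thesis using D nl unfolding s st
      by (auto simp: DeadCfg_def d1_legal_def)
  next
    assume k: "kind s = 1"
    from step1[OF k[unfolded s]] have st: "qlg_step (inp,d1,d2,i,out) = (inp, tl d1, hd d1 # d2, i, out)"
      and ne: "d1 \<noteq> []" "d2 = [] \<or> hd d2 < hd d1" by auto
    have h1: "\<And>z. z \<in> set d1 \<Longrightarrow> z \<le> hd d1" using hd_max[OF W(2)] by blast
    have h2: "\<And>z. z \<in> set d2 \<Longrightarrow> z \<le> hd d2" using hd_max[OF W(3)] by blast
    have tl1: "\<And>z. z \<in> set (tl d1) \<longleftrightarrow> z \<in> set d1 \<and> z \<noteq> hd d1"
      using set_tl_iff[of d1] W(1) ne(1) by auto
    have cxy: "c \<in> set i" "x < c" "c < y" using D by (auto simp: DeadCfg_def)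
    have cfg: "(x \<in> set d1 \<and> y \<in> set d1) \<or> (x \<in> set d1 \<and> y \<in> set d2) \<or>
        (x \<in> set d2 \<and> y \<in> set d2) \<or> (x \<in> set d2 \<and> d1 \<noteq> [] \<and> y = hd d1 \<and> hd d2 < y)"
      using D by (simp add: DeadCfg_def)
    have "(x \<in> set (tl d1) \<and> y \<in> set (tl d1)) \<or> (x \<in> set (tl d1) \<and> y \<in> set (hd d1 # d2)) \<or>
        (x \<in> set (hd d1 # d2) \<and> y \<in> set (hd d1 # d2))"
      using cfg
    proof (elim disjE conjE)
      assume a: "x \<in> set d1" "y \<in> set d1"
      then have "x \<noteq> hd d1" using h1 cxy by (metis leD less_trans)
      then show ?thesis using a tl1 by auto
    next
      assume a: "x \<in> set d1" "y \<in> set d2"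
      have "x \<noteq> hd d1"
      proof
        assume "x = hd d1"
        then have "hd d2 < x" using ne(2) a(2) by auto
        then show False using h2[OF a(2)] cxy by simp
      qed
      then show ?thesis using a tl1 by auto
    qed auto
    then show ?thesis using cxy unfolding s st DeadCfg_def by auto
  next
    assume k: "kind s = 2"
    from step2[OF k[unfolded s]] have st: "qlg_step (inp,d1,d2,i,out) = (inp, d1, tl d2, hd d2 # i, out)"
      and ne: "d2 \<noteq> []" "i = [] \<or> hd d2 < hd i" and nl: "\<not> d1_legal (inp,d1,d2,i,out)" by auto
    have h2: "\<And>z. z \<in> set d2 \<Longrightarrow> z \<le> hd d2" using hd_max[OF W(3)] by blast
    have hi: "\<And>z. z \<in> set i \<Longrightarrow> hd i \<le> z" using hd_min[OF W(4)] by blast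
    have tl2: "\<And>z. z \<in> set (tl d2) \<longleftrightarrow> z \<in> set d2 \<and> z \<noteq> hd d2"
      using set_tl_iff[of d2] W(1) ne(1) by auto
    have "c \<in> set i" using D by (simp add: DeadCfg_def)
    then have ci: "hd d2 < c" using ne(2) hi by (auto intro: less_le_trans)
    have cxy: "x < c" "c < y" using D by (auto simp: DeadCfg_def)
    have nm: "\<not> (d1 \<noteq> [] \<and> y = hd d1 \<and> hd d2 < y)" using nl by (auto simp: d1_legal_def)
    have yn: "y \<in> set d2 \<Longrightarrow> y \<noteq> hd d2" using ci cxy by auto
    have xn: "x \<in> set d2 \<Longrightarrow> y \<in> set d2 \<Longrightarrow> x \<noteq> hd d2" using h2 cxy ci by force
    have cfg: "(x \<in> set d1 \<and> y \<in> set d1) \<or> (x \<in> set d1 \<and> y \<in> set d2) \<or>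
        (x \<in> set d2 \<and> y \<in> set d2)"
      using D nm by (auto simp: DeadCfg_def)
    then have "(x \<in> set d1 \<and> y \<in> set d1) \<or> (x \<in> set d1 \<and> y \<in> set (tl d2)) \<or>
        (x \<in> set (tl d2) \<and> y \<in> set (tl d2))" using tl2 xn yn by blast
    then show ?thesis using D unfolding s st DeadCfg_def by auto
  next
    assume k: "kind s = 3"
    from step3[OF k[unfolded s]] have st: "qlg_step (inp,d1,d2,i,out) = (inp, d1, d2, tl i, out @ [hd i])"
      and ne: "i \<noteq> []" by auto
    have tli: "\<And>z. z \<in> set (tl i) \<longleftrightarrow> z \<in> set i \<and> z \<noteq> hd i"
      using set_tl_iff[of i] W(1) ne(1) by auto
    show ?thesis using D assms(3) k unfolding s st DeadCfg_def
      by (simp only: sel_simps tli) auto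
  next
    assume "kind s = 4" then show ?thesis using step4 assms by auto
  qed
qed

locale run =
  fixes p :: "nat list"
  assumes srt: "qlg2_sortable p"
begin

definition S :: "nat \<Rightarrow> mstate" where "S t = (qlg_step ^^ t) (p,[],[],[],[])"

abbreviation "T \<equiv> 4 * length p"
abbreviation "rk t e \<equiv> rank (S t) e"

lemma S_Suc: "S (Suc t) = qlg_step (S t)" by (simp add: S_def)
lemma S_0: "S 0 = (p,[],[],[],[])" by (simp add: S_def)

lemma dist: "distinct p" using srt by (auto simp: qlg2_sortable_def is_perm_def)

lemma final: "OUT (S T) = sort p"
  using srt by (auto simp: qlg2_sortable_def qlg_output_def S_def OUT_def split: prod.splits)

lemma Wf_S: "Wf p (S t)"
proof (induction t)
  case 0 show ?case using dist by (auto simp: S_0 Wf_def intro: exI[of _ 0])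
next
  case (Suc t) then show ?case by (simp add: S_Suc Wf_step)
qed

lemma rk_Suc: "rk (Suc t) e = rk t e \<or> (rk (Suc t) e = Suc (rk t e) \<and> kind (S t) = rk t e \<and> e = mover (S t))"
  using rank_step[OF Wf_S, of t] rank_step4[of "S t"] by (cases "kind (S t) = 4") (auto simp: S_Suc)

lemma rk_mono: "t \<le> t' \<Longrightarrow> rk t e \<le> rk t' e"
proof (induction t' rule: dec_induct)
  case base then show ?case by simp
next
  case (step m) then show ?case using rk_Suc[of m e] by auto
qed

lemma rk_0: "e \<in> set p \<Longrightarrow> rk 0 e = 0" by (simp add: S_0 rank_def)

lemma rk_T: "e \<in> set p \<Longrightarrow> rk T e = 4"
proof -
  assume e: "e \<in> set p"
  have "e \<in> set (OUT (S T))" using final e by simp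
  then show ?thesis using rank_iff(5)[OF Wf_S e] by simp
qed

lemma ivt: assumes "rk t0 e \<le> a" "a < rk t1 e"
  shows "\<exists>\<tau>. t0 \<le> \<tau> \<and> \<tau> < t1 \<and> rk \<tau> e = a \<and> rk (Suc \<tau>) e = Suc a"
proof -
  have "t0 \<le> t1" using assms rk_mono by (metis leD le_trans nat_le_linear)
  then show ?thesis using assms
  proof (induction t1 rule: dec_induct)
    case base then show ?case by simp
  next
    case (step m)
    show ?case
    proof (cases "a < rk m e")
      case True then show ?thesis using step by (meson less_Suc_eq)
    next
      case False
      then have "rk m e = a" using step.prems rk_Suc[of m e] by auto
      then show ?thesis using step.hyps step.prems rk_Suc[of m e] by (intro exI[of _ m]) auto
    qed
  qed
qed

lemma inv_range:
  assumes "P t0" "\<And>\<sigma>. t0 \<le> \<sigma> \<Longrightarrow> \<sigma> < t1 \<Longrightarrow> P \<sigma> \<Longrightarrow> P (Suc \<sigma>)" "t0 \<le> t" "t \<le> t1"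
  shows "P t"
  using assms(3,4)
proof (induction t rule: dec_induct)
  case base then show ?case using assms(1) by simp
next
  case (step m) then show ?case using assms(2) by simp
qed

lemma out_mono: "t \<le> t' \<Longrightarrow> \<exists>r. OUT (S t') = OUT (S t) @ r"
proof (induction t' rule: dec_induct)
  case base then show ?case by simp
next
  case (step m) then show ?case using out_step[of "S m"] by (auto simp: S_Suc)
qed

lemma ok: assumes "t \<le> T" "rk t ob = 4" "ob \<in> set p" "rk t e < 4" "e \<in> set p"
  shows "ob < e"
proof -
  obtain r where r: "OUT (S T) = OUT (S t) @ r" using out_mono[OF assms(1)] by auto
  have o: "ob \<in> set (OUT (S t))" using rank_iff(5)[OF Wf_S assms(3)] assms(2) by simp
  have e: "e \<notin> set (OUT (S t))" using rank_iff(5)[OF Wf_S assms(5), of t] assms(4) by auto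
  have "e \<in> set r" using e assms(5) final r by (metis Un_iff set_append set_sort)
  moreover have "sorted (OUT (S t) @ r)" using final r by simp
  ultimately have "ob \<le> e" using o by (auto simp: sorted_append)
  moreover have "ob \<noteq> e" using o e by auto
  ultimately show ?thesis by simp
qed

lemma in_p: "Wf p s \<Longrightarrow> e \<in> set (INP s) \<or> e \<in> set (DA s) \<or> e \<in> set (DB s) \<or> e \<in> set (II s) \<or> e \<in> set (OUT s) \<Longrightarrow> e \<in> set p"
  by (cases s) (auto simp: Wf_def)

lemma popped_min: assumes "t < T" "kind (S t) = 3" "x \<in> set p" "rk (Suc t) x < 4"
  shows "hd (II (S t)) < x"
proof -
  have m: "mover (S t) = hd (II (S t))" using assms(2)
    by (cases "S t") (auto simp: mover_def)
  have "rk t (mover (S t)) = 3" using rank_step(2)[OF Wf_S, of t] assms(2) by simp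
  then have "hd (II (S t)) \<in> set (II (S t))" using assms(2) step3[of "INP (S t)" "DA (S t)" "DB (S t)" "II (S t)" "OUT (S t)"]
    by (simp add: state_eq[symmetric])
  then have hp: "hd (II (S t)) \<in> set p" using in_p[OF Wf_S] by blast
  have "rk (Suc t) (mover (S t)) = 4" using rank_step[OF Wf_S, of t] assms(2) by (simp add: S_Suc)
  then show ?thesis using ok[of "Suc t" "hd (II (S t))" x] assms m hp by simp
qed

lemma dead: assumes "t \<le> T" "DeadCfg c x y (S t)" shows False
proof -
  have "DeadCfg c x y (S \<tau>)" if "t \<le> \<tau>" "\<tau> \<le> T" for \<tau>
  proof (rule inv_range[of "\<lambda>\<tau>. DeadCfg c x y (S \<tau>)" t T, OF assms(2) _ that])
    fix \<sigma> assume a: "t \<le> \<sigma>" "\<sigma> < T" "DeadCfg c x y (S \<sigma>)"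
    have xp: "x \<in> set p" using a(3) in_p[OF Wf_S] by (auto simp: DeadCfg_def)
    have "rk \<sigma> x \<le> 2" using a(3) rank_iff[OF Wf_S xp, of \<sigma>] rank_le4[of "S \<sigma>" x]
      by (auto simp: DeadCfg_def)
    then have "rk (Suc \<sigma>) x < 4" using rk_Suc[of \<sigma> x] by auto
    then have "kind (S \<sigma>) = 3 \<Longrightarrow> hd (II (S \<sigma>)) \<noteq> c"
      using popped_min[OF a(2) _ xp] a(3) by (fastforce simp: DeadCfg_def)
    then show "DeadCfg c x y (S (Suc \<sigma>))" using dead_step[OF Wf_S a(3)] by (simp add: S_Suc)
  qed
  then have D: "DeadCfg c x y (S T)" using assms(1) by simp
  have xp: "x \<in> set p" using D in_p[OF Wf_S] by (auto simp: DeadCfg_def)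
  have "x \<in> set (DA (S T)) \<or> x \<in> set (DB (S T))" using D by (auto simp: DeadCfg_def)
  then have "rk T x = 1 \<or> rk T x = 2" using rank_iff(2,3)[OF Wf_S xp, of T] by blast
  then show False using rk_T[OF xp] by simp
qed


end



lemma step_sel:
  "INP (qlg_step s) = (if kind s = 0 then tl (INP s) else INP s)"
  "DA (qlg_step s) = (if kind s = 0 then hd (INP s) # DA s else if kind s = 1 then tl (DA s) else DA s)"
  "DB (qlg_step s) = (if kind s = 1 then hd (DA s) # DB s else if kind s = 2 then tl (DB s) else DB s)"
  "II (qlg_step s) = (if kind s = 2 then hd (DB s) # II s else if kind s = 3 then tl (II s) else II s)"
proof -
  obtain inp d1 d2 i out where s: "s = (inp,d1,d2,i,out)" by (cases s) auto
  have "kind s \<in> {0,1,2,3,4}" by (rule kind_cases)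
  then have "INP (qlg_step s) = (if kind s = 0 then tl (INP s) else INP s) \<and>
    DA (qlg_step s) = (if kind s = 0 then hd (INP s) # DA s else if kind s = 1 then tl (DA s) else DA s) \<and>
    DB (qlg_step s) = (if kind s = 1 then hd (DA s) # DB s else if kind s = 2 then tl (DB s) else DB s) \<and>
    II (qlg_step s) = (if kind s = 2 then hd (DB s) # II s else if kind s = 3 then tl (II s) else II s)"
    using step0[of inp d1 d2 i out] step1[of inp d1 d2 i out]
      step2[of inp d1 d2 i out] step3[of inp d1 d2 i out] step4[of s]
    by (auto simp: s)
  then show "INP (qlg_step s) = (if kind s = 0 then tl (INP s) else INP s)"
  "DA (qlg_step s) = (if kind s = 0 then hd (INP s) # DA s else if kind s = 1 then tl (DA s) else DA s)"
  "DB (qlg_step s) = (if kind s = 1 then hd (DA s) # DB s else if kind s = 2 then tl (DB s) else DB s)"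
  "II (qlg_step s) = (if kind s = 2 then hd (DB s) # II s else if kind s = 3 then tl (II s) else II s)"
    by auto
qed

definition L1 :: "mstate \<Rightarrow> bool" where
  "L1 s = (DA s \<noteq> [] \<and> (DB s = [] \<or> hd (DB s) < hd (DA s)))"
definition L0 :: "mstate \<Rightarrow> bool" where
  "L0 s = (INP s \<noteq> [] \<and> (DA s = [] \<or> hd (DA s) < hd (INP s)))"

lemma L1_eq: "d1_legal s = L1 s" by (cases s) (auto simp: d1_legal_def L1_def)
lemma L0_eq: "d0_legal s = L0 s" by (cases s) (auto simp: d0_legal_def L0_def)

lemma kind_facts:
  "kind s = 0 \<Longrightarrow> L0 s \<and> \<not> L1 s"
  "kind s = 1 \<Longrightarrow> L1 s"
  "kind s = 2 \<Longrightarrow> \<not> L0 s \<and> \<not> L1 s \<and> DB s \<noteq> [] \<and> (II s = [] \<or> hd (DB s) < hd (II s))"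
  "kind s = 3 \<Longrightarrow> II s \<noteq> []"
  "kind s = 4 \<Longrightarrow> \<not> L0 s \<and> \<not> L1 s"
  "L1 s \<Longrightarrow> kind s = 1 \<or> kind s = 3"
proof -
  show "kind s = 0 \<Longrightarrow> L0 s \<and> \<not> L1 s" by (simp add: kind_def L0_eq L1_eq split: if_splits)
  show "kind s = 1 \<Longrightarrow> L1 s" by (simp add: kind_def L0_eq L1_eq split: if_splits)
  show "kind s = 4 \<Longrightarrow> \<not> L0 s \<and> \<not> L1 s" by (simp add: kind_def L0_eq L1_eq split: if_splits)
  show "L1 s \<Longrightarrow> kind s = 1 \<or> kind s = 3" by (simp add: kind_def L0_eq L1_eq split: if_splits)
  have "kind s = 2 \<Longrightarrow> \<not> L0 s \<and> \<not> L1 s \<and> d2_legal s" by (simp add: kind_def L0_eq L1_eq split: if_splits)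
  moreover have "d2_legal s \<Longrightarrow> DB s \<noteq> [] \<and> (II s = [] \<or> hd (DB s) < hd (II s))"
    by (cases s) (simp add: d2_legal_def)
  ultimately show "kind s = 2 \<Longrightarrow> \<not> L0 s \<and> \<not> L1 s \<and> DB s \<noteq> [] \<and> (II s = [] \<or> hd (DB s) < hd (II s))"
    by blast
  have "kind s = 3 \<Longrightarrow> d3_legal s" by (simp add: kind_def split: if_splits)
  moreover have "d3_legal s \<Longrightarrow> II s \<noteq> []" by (cases s) (simp add: d3_legal_def)
  ultimately show "kind s = 3 \<Longrightarrow> II s \<noteq> []" by blast
qed

lemma Wf_sel: assumes "Wf p s"
  shows "distinct (INP s @ DA s @ DB s @ II s @ OUT s)" "set (INP s @ DA s @ DB s @ II s @ OUT s) = set p"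
    "sorted_wrt (>) (DA s)" "sorted_wrt (>) (DB s)" "sorted_wrt (<) (II s)" "\<exists>k. INP s = drop k p"
  using assms by (cases s; auto simp: Wf_def)+

lemma mover_eq: "kind s = 0 \<Longrightarrow> mover s = hd (INP s)" "kind s = 1 \<Longrightarrow> mover s = hd (DA s)"
  "kind s = 2 \<Longrightarrow> mover s = hd (DB s)" "kind s = 3 \<Longrightarrow> mover s = hd (II s)"
  by (cases s; auto simp: mover_def)+

lemma set_tl_iff2: "distinct xs \<Longrightarrow> x \<in> set (tl xs) \<longleftrightarrow> (x \<in> set xs \<and> x \<noteq> hd xs)"
  by (cases xs) auto

lemma hdmax: "sorted_wrt (>) xs \<Longrightarrow> y \<in> set xs \<Longrightarrow> y \<le> (hd xs::nat)" by (rule hd_max)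

lemma stayDA: assumes "Wf p s" "z \<in> set (DA s)" "w \<in> set (DB s)" "z < w"
  shows "z \<in> set (DA (qlg_step s))"
proof -
  note W = Wf_sel[OF assms(1)]
  have "kind s = 1 \<Longrightarrow> z \<noteq> hd (DA s)"
  proof
    assume k: "kind s = 1" "z = hd (DA s)"
    then have "hd (DB s) < z" using kind_facts(2)[OF k(1)] assms(3) by (auto simp: L1_def)
    then show False using hdmax[OF W(4) assms(3)] assms(4) by simp
  qed
  then show ?thesis using assms(2) set_tl_iff2[of "DA s" z] W(1) by (auto simp: step_sel)
qed

lemma keepx: assumes "Wf p s" "INP s \<noteq> []" "x \<in> set (DA s) \<union> set (DB s)" "x < c"
  shows "\<exists>x'. x' < c \<and> x' \<in> set (DA (qlg_step s)) \<union> set (DB (qlg_step s))"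
proof (cases "kind s = 2 \<and> x = hd (DB s)")
  case True
  note W = Wf_sel[OF assms(1)]
  have k: "\<not> L0 s" "\<not> L1 s" "DB s \<noteq> []" using kind_facts(3) True by auto
  then have da: "DA s \<noteq> []" "hd (INP s) \<le> hd (DA s)" using assms(2) by (auto simp: L0_def)
  then have "hd (DA s) \<le> hd (DB s)" using k by (auto simp: L1_def)
  then show ?thesis using True da assms(4) by (intro exI[of _ "hd (DA s)"]) (auto simp: step_sel)
next
  case False
  note W = Wf_sel[OF assms(1)]
  have "x \<in> set (DA (qlg_step s)) \<union> set (DB (qlg_step s))"
    using False assms(3) set_tl_iff2[of "DA s" x] set_tl_iff2[of "DB s" x] W(1)
    by (auto simp: step_sel)
  then show ?thesis using assms(4) by blast
qed

lemma stayDBDA: assumes "Wf p s" "c \<in> set (DB s)" "b \<in> set (DA s)" "b < c"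
  shows "c \<in> set (II (qlg_step s)) \<or> (c \<in> set (DB (qlg_step s)) \<and> b \<in> set (DA (qlg_step s)))"
proof -
  note W = Wf_sel[OF assms(1)]
  have "b \<in> set (DA (qlg_step s))" using stayDA[OF assms(1,3,2,4)] .
  moreover have "c \<in> set (II (qlg_step s)) \<or> c \<in> set (DB (qlg_step s))"
    using assms(2) set_tl_iff2[of "DB s" c] W(1) by (auto simp: step_sel)
  ultimately show ?thesis by blast
qed

context run begin

definition U :: "nat \<Rightarrow> nat" where "U t = length p - length (INP (S t))"

lemma inp_drop: "INP (S t) = drop (U t) p"
proof -
  obtain k where k: "INP (S t) = drop k p" using Wf_sel(6)[OF Wf_S] by blast
  show ?thesis
  proof (cases "k \<le> length p")
    case True then show ?thesis by (simp add: U_def k)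
  next
    case False then show ?thesis by (simp add: U_def k)
  qed
qed

lemma nth_in_drop: "distinct xs \<Longrightarrow> j < length xs \<Longrightarrow> xs ! j \<in> set (drop k xs) \<longleftrightarrow> k \<le> j"
proof
  assume d: "distinct xs" "j < length xs" and "xs ! j \<in> set (drop k xs)"
  then obtain i where i: "i < length (drop k xs)" "drop k xs ! i = xs ! j" by (metis in_set_conv_nth)
  then have "xs ! (k + i) = xs ! j" by simp
  then have "k + i = j" using d i by (simp add: nth_eq_iff_index_eq)
  then show "k \<le> j" by simp
next
  assume "distinct xs" "j < length xs" "k \<le> j"
  then have "drop k xs ! (j - k) = xs ! j" "j - k < length (drop k xs)" by auto
  then show "xs ! j \<in> set (drop k xs)" by (metis nth_mem)
qed

lemma unread: "j < length p \<Longrightarrow> rk t (p ! j) = 0 \<longleftrightarrow> U t \<le> j"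
  using rank_iff(1)[OF Wf_S, of "p!j" t] inp_drop nth_in_drop[OF dist] by simp

lemma hd_inp: "INP (S t) \<noteq> [] \<Longrightarrow> hd (INP (S t)) = p ! U t \<and> U t < length p"
  using inp_drop[of t] by (metis drop_all hd_drop_conv_nth not_le)

lemma inP: "e \<in> set (INP (S t)) \<or> e \<in> set (DA (S t)) \<or> e \<in> set (DB (S t)) \<or> e \<in> set (II (S t)) \<or> e \<in> set (OUT (S t)) \<Longrightarrow> e \<in> set p"
  using in_p[OF Wf_S] by blast

lemma mover_of: "rk (Suc t) e = Suc (rk t e) \<Longrightarrow> kind (S t) = rk t e \<and> mover (S t) = e"
  using rk_Suc[of t e] by auto

lemma read_time: assumes "j < length p"
  shows "\<exists>\<tau>. \<tau> < T \<and> rk \<tau> (p!j) = 0 \<and> rk (Suc \<tau>) (p!j) = 1 \<and> kind (S \<tau>) = 0 \<and>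
     hd (INP (S \<tau>)) = p ! j \<and> U \<tau> = j \<and> p ! j \<in> set (DA (S (Suc \<tau>)))"
proof -
  have e: "p ! j \<in> set p" using assms by simp
  obtain \<tau> where t: "\<tau> < T" "rk \<tau> (p!j) = 0" "rk (Suc \<tau>) (p!j) = 1"
    using ivt[of 0 "p!j" 0 T] rk_0[OF e] rk_T[OF e] by auto
  have k: "kind (S \<tau>) = 0" "mover (S \<tau>) = p ! j" using mover_of[of \<tau> "p!j"] t by auto
  have h: "hd (INP (S \<tau>)) = p ! j" using k mover_eq(1) by simp
  have ne: "INP (S \<tau>) \<noteq> []" using kind_facts(1)[OF k(1)] by (simp add: L0_def)
  have "U \<tau> = j" using hd_inp[OF ne] h dist assms by (metis nth_eq_iff_index_eq)
  moreover have "p ! j \<in> set (DA (S (Suc \<tau>)))" using k h by (simp add: S_Suc step_sel)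
  ultimately show ?thesis using t k h by blast
qed

lemma unread_mono: "j \<le> j' \<Longrightarrow> j' < length p \<Longrightarrow> rk t (p ! j) = 0 \<Longrightarrow> rk t (p ! j') = 0"
  using unread by auto

lemma rk_le2_between: "t \<le> t' \<Longrightarrow> t' \<le> t'' \<Longrightarrow> rk t e = a \<Longrightarrow> rk t'' e = a \<Longrightarrow> rk t' e = a"
  using rk_mono[of t t' e] rk_mono[of t' t'' e] by simp


end



context run begin
lemma fail_read: assumes "t \<le> T" "c \<in> set (II (S t))" "x \<in> set (DA (S t)) \<union> set (DB (S t))" "x < c"
  "d \<in> set (INP (S t))" "c < d"
  shows False
proof -
  have dp: "d \<in> set p" using assms(5) inP by blast
  have d0: "rk t d = 0" using rank_iff(1)[OF Wf_S dp] assms(5) by simp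
  obtain \<tau> where t: "t \<le> \<tau>" "\<tau> < T" "rk \<tau> d = 0" "rk (Suc \<tau>) d = 1"
    using ivt[of t d 0 T] d0 rk_T[OF dp] by auto
  have k: "kind (S \<tau>) = 0" "mover (S \<tau>) = d" using mover_of[of \<tau> d] t by auto
  define Q where "Q \<sigma> = (c \<in> set (II (S \<sigma>)) \<and> (\<exists>x. x < c \<and> x \<in> set (DA (S \<sigma>)) \<union> set (DB (S \<sigma>))))" for \<sigma>
  have Q: "Q (Suc \<tau>)"
  proof (rule inv_range[of Q t "Suc \<tau>"])
    show "Q t" using assms by (auto simp: Q_def)
  next
    fix \<sigma> assume a: "t \<le> \<sigma>" "\<sigma> < Suc \<tau>" "Q \<sigma>"
    then obtain x where x: "x < c" "x \<in> set (DA (S \<sigma>)) \<union> set (DB (S \<sigma>))" "c \<in> set (II (S \<sigma>))"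
      by (auto simp: Q_def)
    have "rk \<sigma> d = 0" using rk_mono[of \<sigma> \<tau> d] t a by simp
    then have ne: "INP (S \<sigma>) \<noteq> []" using rank_iff(1)[OF Wf_S dp] by auto
    have ex: "\<exists>x'. x' < c \<and> x' \<in> set (DA (S (Suc \<sigma>))) \<union> set (DB (S (Suc \<sigma>)))"
      using keepx[OF Wf_S ne x(2,1)] by (simp add: S_Suc)
    have xp: "x \<in> set p" using x(2) inP by blast
    have "rk \<sigma> x \<le> 2" using x(2) rank_iff[OF Wf_S xp, of \<sigma>] rank_le4[of "S \<sigma>" x] by auto
    then have "rk (Suc \<sigma>) x < 4" using rk_Suc[of \<sigma> x] by auto
    then have nc: "kind (S \<sigma>) = 3 \<Longrightarrow> hd (II (S \<sigma>)) \<noteq> c"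
      using popped_min[of \<sigma> x] a t x xp by fastforce
    have "c \<in> set (II (S (Suc \<sigma>)))"
      using x(3) nc set_tl_iff2[of "II (S \<sigma>)" c] Wf_sel(1)[OF Wf_S, of \<sigma>]
      by (auto simp: S_Suc step_sel)
    then show "Q (Suc \<sigma>)" using ex by (auto simp: Q_def)
  qed (use t in auto)
  then obtain x where x: "x < c" "x \<in> set (DA (S (Suc \<tau>))) \<union> set (DB (S (Suc \<tau>)))"
    and c: "c \<in> set (II (S (Suc \<tau>)))" by (auto simp: Q_def)
  have hdA: "DA (S (Suc \<tau>)) = d # DA (S \<tau>)" "DB (S (Suc \<tau>)) = DB (S \<tau>)"
    using k mover_eq(1)[OF k(1)] by (auto simp: S_Suc step_sel)
  note W = Wf_sel[OF Wf_S, of "Suc \<tau>"]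
  have "DeadCfg c x d (S (Suc \<tau>)) \<or> DeadCfg c x (hd (DB (S (Suc \<tau>)))) (S (Suc \<tau>))"
  proof (cases "x \<in> set (DA (S (Suc \<tau>)))")
    case True then show ?thesis using x c assms(6) hdA by (auto simp: DeadCfg_def)
  next
    case False
    then have xb: "x \<in> set (DB (S (Suc \<tau>)))" using x by auto
    then have ne: "DB (S (Suc \<tau>)) \<noteq> []" by auto
    have hm: "hd (DB (S (Suc \<tau>))) \<in> set (DB (S (Suc \<tau>)))" using ne by simp
    have cp: "c \<in> set p" using c inP by blast
    have "hd (DB (S (Suc \<tau>))) \<noteq> c" using hm c rank_iff(3,4)[OF Wf_S cp, of "Suc \<tau>"] by auto
    then show ?thesis
    proof (cases "hd (DB (S (Suc \<tau>))) < c")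
      case True then show ?thesis using xb c x assms(6) hdA by (auto simp: DeadCfg_def)
    next
      case False
      then have "c < hd (DB (S (Suc \<tau>)))" using \<open>hd (DB (S (Suc \<tau>))) \<noteq> c\<close> by simp
      then have "DeadCfg c x (hd (DB (S (Suc \<tau>)))) (S (Suc \<tau>))"
        unfolding DeadCfg_def using xb c x hm by blast
      then show ?thesis by blast
    qed
  qed
  then show False using dead[of "Suc \<tau>"] t by auto
qed


lemma stayII: assumes "\<sigma> < T" "c \<in> set (II (S \<sigma>))" "x \<in> set p" "rk (Suc \<sigma>) x < 4" "x < c"
  shows "c \<in> set (II (S (Suc \<sigma>)))"
proof -
  have "kind (S \<sigma>) = 3 \<Longrightarrow> hd (II (S \<sigma>)) \<noteq> c" using popped_min[OF assms(1) _ assms(3,4)] assms(5) by auto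
  then show ?thesis using assms(2) set_tl_iff2[of "II (S \<sigma>)" c] Wf_sel(1)[OF Wf_S, of \<sigma>]
    by (auto simp: S_Suc step_sel)
qed

lemma not_out: "t \<le> T \<Longrightarrow> e \<in> set p \<Longrightarrow> f \<in> set p \<Longrightarrow> rk t f < 4 \<Longrightarrow> f < e \<Longrightarrow> rk t e \<noteq> 4"
  using ok[of t e f] by auto

lemma read_time2: assumes "j < length p"
  obtains \<tau> where "\<tau> < T" "rk \<tau> (p!j) = 0" "rk (Suc \<tau>) (p!j) = 1" "kind (S \<tau>) = 0"
     "hd (INP (S \<tau>)) = p ! j" "U \<tau> = j" "DA (S (Suc \<tau>)) = p ! j # DA (S \<tau>)"
     "DB (S (Suc \<tau>)) = DB (S \<tau>)" "II (S (Suc \<tau>)) = II (S \<tau>)" "INP (S (Suc \<tau>)) = drop (Suc j) p"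
     "DA (S \<tau>) = [] \<or> hd (DA (S \<tau>)) < p ! j"
proof -
  obtain \<tau> where t: "\<tau> < T" "rk \<tau> (p!j) = 0" "rk (Suc \<tau>) (p!j) = 1" "kind (S \<tau>) = 0"
     "hd (INP (S \<tau>)) = p ! j" "U \<tau> = j" using read_time[OF assms] by blast
  have "INP (S (Suc \<tau>)) = tl (drop j p)" using t inp_drop[of \<tau>] by (simp add: S_Suc step_sel)
  also have "\<dots> = drop (Suc j) p" by (simp add: drop_Suc tl_drop)
  finally have i: "INP (S (Suc \<tau>)) = drop (Suc j) p" .
  have "DA (S \<tau>) = [] \<or> hd (DA (S \<tau>)) < p ! j" using kind_facts(1)[OF t(4)] t(5) by (auto simp: L0_def)
  then show ?thesis using that t i by (simp add: S_Suc step_sel)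
qed

lemma unread_after: "INP (S t) = drop k p \<Longrightarrow> k \<le> j \<Longrightarrow> j < length p \<Longrightarrow> rk t (p ! j) = 0"
  using rank_iff(1)[OF Wf_S, of "p!j" t] nth_in_drop[OF dist] by simp

lemma read_before: "U t = k \<Longrightarrow> j < k \<Longrightarrow> rk t (p ! j) \<noteq> 0"
  using unread[of j t] U_def by (metis diff_le_self le_less_trans not_le)

lemma len4: "length xs = 4 \<Longrightarrow> \<exists>a b c d. xs = [a,b,c,d]"
  by (auto simp: numeral_eq_Suc length_Suc_conv) 
lemma occ4: assumes "occurrence p [3,2,1,4] js"
  obtains j1 j2 j3 j4 where "js = [j1,j2,j3,j4]" "j1 < j2" "j2 < j3" "j3 < j4" "j4 < length p"
    "p!j3 < p!j2" "p!j2 < p!j1" "p!j1 < p!j4"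
proof -
  have l: "length js = 4" using assms by (simp add: occurrence_def)
  then obtain j1 j2 j3 j4 where js: "js = [j1,j2,j3,j4]" using len4 by blast
  have A: "\<forall>a<4. \<forall>b<4. (p ! (js ! a) < p ! (js ! b)) = ([3,2,1,4::nat] ! a < [3,2,1,4] ! b)"
    using assms by (simp add: occurrence_def)
  have "p!j3 < p!j2" using A[rule_format, of 2 1] by (simp add: js)
  moreover have "p!j2 < p!j1" using A[rule_format, of 1 0] by (simp add: js)
  moreover have "p!j1 < p!j4" using A[rule_format, of 0 3] by (simp add: js)
  moreover have "j1 < j2" "j2 < j3" "j3 < j4" "j4 < length p" using assms by (auto simp: occurrence_def js)
  ultimately show ?thesis using that js by blast
qed

theorem part1: "\<not> contains p [3,2,1,4]"
proof
  assume "contains p [3,2,1,4]"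
  then obtain js where "occurrence p [3,2,1,4] js" by (auto simp: contains_def)
  then obtain j1 j2 j3 j4 where j: "j1 < j2" "j2 < j3" "j3 < j4" "j4 < length p"
    "p!j3 < p!j2" "p!j2 < p!j1" "p!j1 < p!j4" by (rule occ4)
  have h3: "j3 < length p" "j2 < length p" using j by auto
  obtain \<tau>a where ta0: "\<tau>a < T" "rk \<tau>a (p!j3) = 0" "rk (Suc \<tau>a) (p!j3) = 1" "kind (S \<tau>a) = 0"
     "hd (INP (S \<tau>a)) = p!j3" "U \<tau>a = j3" "DA (S (Suc \<tau>a)) = p!j3 # DA (S \<tau>a)"
     "DB (S (Suc \<tau>a)) = DB (S \<tau>a)"
     "II (S (Suc \<tau>a)) = II (S \<tau>a)" "INP (S (Suc \<tau>a)) = drop (Suc j3) p"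
     "DA (S \<tau>a) = [] \<or> hd (DA (S \<tau>a)) < p!j3"
    by (rule read_time2[OF h3(1)])
  obtain \<tau>b where tb0: "\<tau>b < T" "rk \<tau>b (p!j2) = 0" "rk (Suc \<tau>b) (p!j2) = 1" "kind (S \<tau>b) = 0"
     "hd (INP (S \<tau>b)) = p!j2" "U \<tau>b = j2" "DA (S (Suc \<tau>b)) = p!j2 # DA (S \<tau>b)"
     "DB (S (Suc \<tau>b)) = DB (S \<tau>b)"
     "II (S (Suc \<tau>b)) = II (S \<tau>b)" "INP (S (Suc \<tau>b)) = drop (Suc j2) p"
     "DA (S \<tau>b) = [] \<or> hd (DA (S \<tau>b)) < p!j2"
    by (rule read_time2[OF h3(2)])
  define a b c d where "a = p!j3" "b = p!j2" "c = p!j1" "d = p!j4"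
  note ta = ta0[folded a_b_c_d_def] and tb = tb0[folded a_b_c_d_def]
  have inp: "a \<in> set p" "b \<in> set p" "c \<in> set p" "d \<in> set p" using j by (auto simp: a_b_c_d_def)
  have "rk \<tau>a b \<noteq> 0" using read_before[OF ta(6) j(2)] by (simp add: a_b_c_d_def)
  then have ab: "\<tau>b < \<tau>a" using rk_mono[of \<tau>a \<tau>b b] tb(2) by (cases "\<tau>a \<le> \<tau>b") auto
  note Wb = Wf_sel[OF Wf_S, of \<tau>b]
  have c1: "rk \<tau>b c \<noteq> 0" using read_before[OF tb(6) j(1)] by (simp add: a_b_c_d_def)
  have "rk \<tau>b a = 0" using unread[of j3 \<tau>b] tb(6) j by (simp add: a_b_c_d_def)
  then have c4: "rk \<tau>b c \<noteq> 4" using not_out[of \<tau>b c a] inp tb(1) j by (simp add: a_b_c_d_def)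
  have c2: "rk \<tau>b c \<noteq> 1"
  proof
    assume "rk \<tau>b c = 1"
    then have "c \<in> set (DA (S \<tau>b))" using rank_iff(2)[OF Wf_S inp(3)] by simp
    then show False using hdmax[OF Wb(3)] tb(11) j unfolding a_b_c_d_def by force
  qed
  have "rk \<tau>b c = 2 \<or> rk \<tau>b c = 3" using c1 c2 c4 rank_le4[of "S \<tau>b" c] by linarith
  then have "c \<in> set (DB (S \<tau>b)) \<or> c \<in> set (II (S \<tau>b))" using rank_iff(3,4)[OF Wf_S inp(3)] by auto
  then have J0: "c \<in> set (II (S (Suc \<tau>b))) \<or> (c \<in> set (DB (S (Suc \<tau>b))) \<and> b \<in> set (DA (S (Suc \<tau>b))))"
    using tb by auto
  have J: "c \<in> set (II (S \<tau>a)) \<or> (c \<in> set (DB (S \<tau>a)) \<and> b \<in> set (DA (S \<tau>a)))"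
  proof (rule inv_range[of "\<lambda>\<sigma>. c \<in> set (II (S \<sigma>)) \<or> (c \<in> set (DB (S \<sigma>)) \<and> b \<in> set (DA (S \<sigma>)))" "Suc \<tau>b" \<tau>a, OF J0])
    fix \<sigma> assume s: "Suc \<tau>b \<le> \<sigma>" "\<sigma> < \<tau>a"
      "c \<in> set (II (S \<sigma>)) \<or> (c \<in> set (DB (S \<sigma>)) \<and> b \<in> set (DA (S \<sigma>)))"
    have "rk (Suc \<sigma>) a = 0" using rk_mono[of "Suc \<sigma>" \<tau>a a] s ta by simp
    then have "c \<in> set (II (S \<sigma>)) \<Longrightarrow> c \<in> set (II (S (Suc \<sigma>)))"
      using stayII[of \<sigma> c a] s ta(1) inp j unfolding a_b_c_d_def by simp
    moreover have "c \<in> set (DB (S \<sigma>)) \<and> b \<in> set (DA (S \<sigma>)) \<Longrightarrow>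
      c \<in> set (II (S (Suc \<sigma>))) \<or> (c \<in> set (DB (S (Suc \<sigma>))) \<and> b \<in> set (DA (S (Suc \<sigma>))))"
      using stayDBDA[OF Wf_S, of c \<sigma> b] j unfolding a_b_c_d_def by (simp add: S_Suc)
    ultimately show "c \<in> set (II (S (Suc \<sigma>))) \<or> (c \<in> set (DB (S (Suc \<sigma>))) \<and> b \<in> set (DA (S (Suc \<sigma>))))"
      using s(3) by blast
  qed (use ab in auto)
  have "b \<notin> set (DA (S \<tau>a))"
    using hdmax[OF Wf_sel(3)[OF Wf_S, of \<tau>a]] ta(11) j unfolding a_b_c_d_def by force
  then have "c \<in> set (II (S (Suc \<tau>a)))" using J ta(9) by auto
  moreover have "d \<in> set (INP (S (Suc \<tau>a)))"
    using ta(10) nth_in_drop[OF dist, of j4 "Suc j3"] j unfolding a_b_c_d_def by simp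
  moreover have "a \<in> set (DA (S (Suc \<tau>a)) ) \<union> set (DB (S (Suc \<tau>a)))" using ta(7) by simp
  ultimately show False using fail_read[of "Suc \<tau>a" c a d] ta(1) j unfolding a_b_c_d_def by simp
qed

end


lemma last_before: assumes "P w" "w < (m::nat)"
  shows "\<exists>m'. w \<le> m' \<and> m' < m \<and> P m' \<and> (\<forall>\<sigma>. m' < \<sigma> \<longrightarrow> \<sigma> < m \<longrightarrow> \<not> P \<sigma>)"
  using assms(2)
proof (induction m)
  case 0 then show ?case by simp
next
  case (Suc m)
  show ?case
  proof (cases "P m")
    case True
    have "w \<le> m" using Suc.prems by simp
    then show ?thesis using True by (intro exI[of _ m]) auto
  next
    case False
    have "w \<noteq> m" using False assms(1) by auto
    then have "w < m" using Suc.prems by simp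
    then obtain m' where m': "w \<le> m'" "m' < m" "P m'" "\<forall>\<sigma>. m' < \<sigma> \<longrightarrow> \<sigma> < m \<longrightarrow> \<not> P \<sigma>"
      using Suc.IH by blast
    have "\<forall>\<sigma>. m' < \<sigma> \<longrightarrow> \<sigma> < Suc m \<longrightarrow> \<not> P \<sigma>"
    proof (intro allI impI)
      fix \<sigma> assume a: "m' < \<sigma>" "\<sigma> < Suc m"
      show "\<not> P \<sigma>"
      proof (cases "\<sigma> = m")
        case True then show ?thesis using False by simp
      next
        case False then show ?thesis using m'(4) a by simp
      qed
    qed
    then show ?thesis using m' by (intro exI[of _ m']) simp
  qed
qed

context run begin

lemma no2: assumes "t0 \<le> t1" "\<And>\<sigma>. t0 \<le> \<sigma> \<Longrightarrow> \<sigma> < t1 \<Longrightarrow> kind (S \<sigma>) \<noteq> 2" "rk t0 e \<le> 2"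
  shows "rk t1 e \<le> 2"
proof (rule ccontr)
  assume "\<not> rk t1 e \<le> 2"
  then obtain \<sigma> where s: "t0 \<le> \<sigma>" "\<sigma> < t1" "rk \<sigma> e = 2" "rk (Suc \<sigma>) e = 3"
    using ivt[of t0 e 2 t1] assms(3) by auto
  then have "kind (S \<sigma>) = 2" using mover_of[of \<sigma> e] by simp
  then show False using assms(2)[OF s(1,2)] by simp
qed

lemma read_rank: assumes "kind (S \<tau>) = 0" "hd (INP (S \<tau>)) = h" "\<tau> \<le> T" "e \<in> set p" "rk \<tau> e \<noteq> 0" "h < e"
  shows "e \<in> set (DB (S \<tau>)) \<or> e \<in> set (II (S \<tau>))"
proof -
  note W = Wf_sel[OF Wf_S, of \<tau>]
  have ne: "INP (S \<tau>) \<noteq> []" "DA (S \<tau>) = [] \<or> hd (DA (S \<tau>)) < h"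
    using kind_facts(1)[OF assms(1)] assms(2) by (auto simp: L0_def)
  have hi: "h \<in> set (INP (S \<tau>))" using ne(1) assms(2) hd_in_set by blast
  then have hp1: "h \<in> set p" using inP by blast
  have hp: "h \<in> set p" "rk \<tau> h = 0" using hp1 hi rank_iff(1)[OF Wf_S hp1, of \<tau>] by auto
  have "rk \<tau> h < 4" using hp(2) by simp
  then have "rk \<tau> e \<noteq> 4" using not_out[OF assms(3,4) hp(1)] assms(6) by blast
  moreover have "rk \<tau> e \<noteq> 1"
  proof
    assume "rk \<tau> e = 1"
    then have "e \<in> set (DA (S \<tau>))" using rank_iff(2)[OF Wf_S assms(4)] by simp
    then have "e \<le> hd (DA (S \<tau>))" "DA (S \<tau>) \<noteq> []" using hdmax[OF W(3)] by auto
    then show False using ne(2) assms(6) by simp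
  qed
  ultimately have "rk \<tau> e = 2 \<or> rk \<tau> e = 3" using assms(5) rank_le4[of "S \<tau>" e] by linarith
  then show ?thesis using rank_iff(3,4)[OF Wf_S assms(4)] by auto
qed

lemma block: assumes "\<tau> \<le> \<tau>'" "kind (S \<tau>') = 0" "hd (INP (S \<tau>')) = h"
  "z \<in> set (DA (S \<tau>))" "w \<in> set (DB (S \<tau>))" "z < w" "h < z" "w \<in> set (DB (S \<tau>'))"
  shows False
proof -
  have wp: "w \<in> set p" using assms(5) inP by blast
  have r2: "rk \<tau> w = 2" "rk \<tau>' w = 2" using rank_iff(3)[OF Wf_S wp] assms(5,8) by auto
  have "z \<in> set (DA (S \<tau>'))"
  proof (rule inv_range[of "\<lambda>\<sigma>. z \<in> set (DA (S \<sigma>))" \<tau> \<tau>' \<tau>'])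
    fix \<sigma> assume s: "\<tau> \<le> \<sigma>" "\<sigma> < \<tau>'" "z \<in> set (DA (S \<sigma>))"
    have "rk \<sigma> w = 2" using rk_le2_between[of \<tau> \<sigma> \<tau>' w 2] s r2 by simp
    then have "w \<in> set (DB (S \<sigma>))" using rank_iff(3)[OF Wf_S wp] by simp
    then show "z \<in> set (DA (S (Suc \<sigma>)))" using stayDA[OF Wf_S s(3) _ assms(6)] by (simp add: S_Suc)
  qed (use assms(1,4) in auto)
  moreover have "DA (S \<tau>') = [] \<or> hd (DA (S \<tau>')) < h"
    using kind_facts(1)[OF assms(2)] unfolding L0_def assms(3) by blast
  moreover note hdmax[OF Wf_sel(3)[OF Wf_S, of \<tau>'], of z]
  ultimately have "z < h" by fastforce
  then show False using assms(7) by simp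
qed

end

locale occ5 = run +
  fixes q5 q2 q3 q1 q4 \<tau>1 :: nat
  assumes ord: "q5 < q2" "q2 < q3" "q3 < q1" "q1 < q4" "q4 < length p"
  and vals: "p!q1 < p!q2" "p!q2 < p!q3" "p!q3 < p!q4" "p!q4 < p!q5"
  and t1: "\<tau>1 < T" "rk \<tau>1 (p!q1) = 0" "kind (S \<tau>1) = 0" "hd (INP (S \<tau>1)) = p!q1" "U \<tau>1 = q1"
     "DA (S (Suc \<tau>1)) = p!q1 # DA (S \<tau>1)" "DB (S (Suc \<tau>1)) = DB (S \<tau>1)"
     "II (S (Suc \<tau>1)) = II (S \<tau>1)" "INP (S (Suc \<tau>1)) = drop (Suc q1) p"
begin

abbreviation "A1 \<equiv> p!q1"
abbreviation "A2 \<equiv> p!q2"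
abbreviation "A3 \<equiv> p!q3"
abbreviation "A4 \<equiv> p!q4"
abbreviation "A5 \<equiv> p!q5"

lemma inps: "A1 \<in> set p" "A2 \<in> set p" "A3 \<in> set p" "A4 \<in> set p" "A5 \<in> set p"
  using ord by auto

lemma A4_unread: "A4 \<in> set (INP (S (Suc \<tau>1)))"
  using t1(9) nth_in_drop[OF dist, of q4 "Suc q1"] ord by simp

lemma block1: "\<tau> \<le> \<tau>1 \<Longrightarrow> z \<in> set (DA (S \<tau>)) \<Longrightarrow> w \<in> set (DB (S \<tau>)) \<Longrightarrow> z < w \<Longrightarrow> A1 < z
   \<Longrightarrow> w \<in> set (DB (S \<tau>1)) \<Longrightarrow> False"
  using block[of \<tau> \<tau>1 A1 z w] t1(3,4) by blast

lemma fail1: "c \<in> set (II (S \<tau>1)) \<Longrightarrow> A1 < c \<Longrightarrow> c < A4 \<Longrightarrow> False"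
proof -
  assume a: "c \<in> set (II (S \<tau>1))" "A1 < c" "c < A4"
  have "Suc \<tau>1 \<le> T" using t1(1) by simp
  moreover have "c \<in> set (II (S (Suc \<tau>1)))" using a t1(8) by simp
  moreover have "A1 \<in> set (DA (S (Suc \<tau>1))) \<union> set (DB (S (Suc \<tau>1)))" using t1(6) by simp
  ultimately show False using fail_read[of "Suc \<tau>1" c A1 A4] A4_unread a by blast
qed

lemma A3_DB: "A3 \<in> set (DB (S \<tau>1))"
proof -
  have "rk \<tau>1 A3 \<noteq> 0" using read_before[OF t1(5), of q3] ord by simp
  then have "A3 \<in> set (DB (S \<tau>1)) \<or> A3 \<in> set (II (S \<tau>1))"
    using read_rank[OF t1(3,4), of A3] t1(1) inps(3) vals(1,2) by simp
  then show ?thesis using fail1[of A3] vals by auto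
qed

lemma A2_DB: "A2 \<in> set (DB (S \<tau>1))"
proof -
  have "rk \<tau>1 A2 \<noteq> 0" using read_before[OF t1(5), of q2] ord by simp
  then have "A2 \<in> set (DB (S \<tau>1)) \<or> A2 \<in> set (II (S \<tau>1))"
    using read_rank[OF t1(3,4), of A2] t1(1) inps(2) vals(1) by simp
  moreover have "A2 \<notin> set (II (S \<tau>1))"
  proof
    assume "A2 \<in> set (II (S \<tau>1))"
    then have "DeadCfg A2 A1 A3 (S (Suc \<tau>1))" using t1(6,7,8) A3_DB vals(1,2) unfolding DeadCfg_def by simp
    then show False using dead[of "Suc \<tau>1"] t1(1) by simp
  qed
  ultimately show ?thesis by blast
qed

end



context occ5 begin

lemma rkA2_t1: "rk \<tau>1 A2 = 2" using A2_DB rank_iff(3)[OF Wf_S inps(2)] by simp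
lemma rkA3_t1: "rk \<tau>1 A3 = 2" using A3_DB rank_iff(3)[OF Wf_S inps(3)] by simp

lemma stage_m2:
  obtains m2 \<tau>2 where "\<tau>2 < m2" "kind (S \<tau>2) = 0"
    "m2 < \<tau>1" "kind (S m2) = 1" "hd (DA (S m2)) = A2" "DA (S m2) \<noteq> []"
    "\<And>\<sigma>. Suc m2 \<le> \<sigma> \<Longrightarrow> \<sigma> \<le> \<tau>1 \<Longrightarrow> A2 \<in> set (DB (S \<sigma>))"
    "q2 < U m2" "U m2 \<le> q3" "INP (S m2) \<noteq> []"
    "DB (S m2) = [] \<or> hd (DB (S m2)) < A2"
    "DA (S (Suc m2)) = tl (DA (S m2))"
proof -
  have q2: "q2 < length p" using ord by simp
  obtain \<tau>2 where t2: "\<tau>2 < T" "rk \<tau>2 A2 = 0" "rk (Suc \<tau>2) A2 = 1" "kind (S \<tau>2) = 0"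
    using read_time2[OF q2] by blast
  obtain m2 where m: "Suc \<tau>2 \<le> m2" "m2 < \<tau>1" "rk m2 A2 = 1" "rk (Suc m2) A2 = 2"
    using ivt[of "Suc \<tau>2" A2 1 \<tau>1] t2(3) rkA2_t1 by auto
  have k: "kind (S m2) = 1" "mover (S m2) = A2" using mover_of[of m2 A2] m(3,4) by auto
  have hA: "hd (DA (S m2)) = A2" using mover_eq(2)[OF k(1)] k(2) by simp
  have L: "DA (S m2) \<noteq> []" "DB (S m2) = [] \<or> hd (DB (S m2)) < A2"
    using kind_facts(2)[OF k(1)] hA by (auto simp: L1_def)
  have inDA: "A2 \<in> set (DA (S m2))" using L(1) hA hd_in_set by fastforce
  have DB: "A2 \<in> set (DB (S \<sigma>))" if "Suc m2 \<le> \<sigma>" "\<sigma> \<le> \<tau>1" for \<sigma>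
  proof -
    have "rk \<sigma> A2 = 2" using rk_le2_between[of "Suc m2" \<sigma> \<tau>1 A2 2] that m(4) rkA2_t1 by simp
    then show ?thesis using rank_iff(3)[OF Wf_S inps(2)] by simp
  qed
  have r3: "rk m2 A3 \<le> 2" using rk_mono[of m2 \<tau>1 A3] m(2) rkA3_t1 by simp
  have n1: "rk m2 A3 \<noteq> 1"
  proof
    assume "rk m2 A3 = 1"
    then have "A3 \<in> set (DA (S m2))" using rank_iff(2)[OF Wf_S inps(3)] by simp
    then have "A3 \<le> A2" using hdmax[OF Wf_sel(3)[OF Wf_S, of m2]] hA by fastforce
    then show False using vals by simp
  qed
  have n2: "rk m2 A3 \<noteq> 2"
  proof
    assume "rk m2 A3 = 2"
    then have "A3 \<in> set (DB (S m2))" using rank_iff(3)[OF Wf_S inps(3)] by simp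
    then show False using block1[of m2 A2 A3] m(2) inDA vals A3_DB by simp
  qed
  have r30: "rk m2 A3 = 0" using r3 n1 n2 by linarith
  then have u3: "U m2 \<le> q3" using unread[of q3 m2] ord by simp
  have ne: "INP (S m2) \<noteq> []" using r30 rank_iff(1)[OF Wf_S inps(3), of m2] by auto
  have u2: "q2 < U m2" using unread[of q2 m2] ord m(3) by simp
  have da: "DA (S (Suc m2)) = tl (DA (S m2))" using k(1) by (simp add: S_Suc step_sel)
  show ?thesis using that[of \<tau>2 m2] m(1,2) t2(4) k(1) hA L DB u2 u3 ne da by simp
qed

end

locale occ5m = occ5 +
  fixes m2 \<tau>2 :: nat
  assumes m2: "\<tau>2 < m2" "kind (S \<tau>2) = 0"
    "m2 < \<tau>1" "kind (S m2) = 1" "hd (DA (S m2)) = A2" "DA (S m2) \<noteq> []"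
    "\<And>\<sigma>. Suc m2 \<le> \<sigma> \<Longrightarrow> \<sigma> \<le> \<tau>1 \<Longrightarrow> A2 \<in> set (DB (S \<sigma>))"
    "q2 < U m2" "U m2 \<le> q3" "INP (S m2) \<noteq> []"
    "DB (S m2) = [] \<or> hd (DB (S m2)) < A2"
    "DA (S (Suc m2)) = tl (DA (S m2))"
begin

lemma stage_case:
  obtains (alpha) "hd (INP (S m2)) < A2"
  | (beta) r2 where "r2 < m2" "kind (S r2) = 0" "hd (INP (S r2)) = A2" "U r2 = q2"
     "DB (S r2) = DB (S m2)" "DA (S m2) = A2 # DA (S r2)"
proof -
  obtain m' where m': "\<tau>2 \<le> m'" "m' < m2" "kind (S m') \<in> {0,1,2}"
    "\<forall>\<sigma>. m' < \<sigma> \<longrightarrow> \<sigma> < m2 \<longrightarrow> kind (S \<sigma>) \<notin> {0,1,2}"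
    using last_before[of "\<lambda>\<sigma>. kind (S \<sigma>) \<in> {0,1,2}" \<tau>2 m2] m2(1,2) by auto
  define Q where "Q \<sigma> = (INP (S \<sigma>) = INP (S (Suc m')) \<and> DA (S \<sigma>) = DA (S (Suc m')) \<and> DB (S \<sigma>) = DB (S (Suc m')))" for \<sigma>
  have Q: "Q m2"
  proof (rule inv_range[of Q "Suc m'" m2 m2])
    fix \<sigma> assume s: "Suc m' \<le> \<sigma>" "\<sigma> < m2" "Q \<sigma>"
    have "kind (S \<sigma>) \<notin> {0,1,2}" using m'(4) s by simp
    then show "Q (Suc \<sigma>)" using s(3) unfolding Q_def by (simp add: S_Suc step_sel)
  qed (use m'(2) Q_def in auto)
  then have eq: "INP (S m2) = INP (S (Suc m'))" "DA (S m2) = DA (S (Suc m'))" "DB (S m2) = DB (S (Suc m'))"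
    by (auto simp: Q_def)
  note W = Wf_sel[OF Wf_S, of m']
  have "kind (S m') = 0 \<or> kind (S m') = 1 \<or> kind (S m') = 2" using m'(3) by auto
  then show ?thesis
  proof (elim disjE)
    assume k: "kind (S m') = 0"
    have da: "DA (S m2) = hd (INP (S m')) # DA (S m')" "DB (S m2) = DB (S m')"
      using eq k by (simp_all add: S_Suc step_sel)
    then have h: "hd (INP (S m')) = A2" using m2(5) by simp
    have ne: "INP (S m') \<noteq> []" using kind_facts(1)[OF k] by (simp add: L0_def)
    have "U m' = q2" using hd_inp[OF ne] h dist ord by (metis less_trans nth_eq_iff_index_eq)
    then show ?thesis using beta[of m'] m'(2) k h da by simp
  next
    assume k: "kind (S m') = 1"
    have da: "DA (S m2) = tl (DA (S m'))" "DB (S m2) = hd (DA (S m')) # DB (S m')"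
      using eq k by (simp_all add: S_Suc step_sel)
    have ne: "DA (S m') \<noteq> []" using kind_facts(2)[OF k] by (simp add: L1_def)
    have "A2 \<in> set (tl (DA (S m')))" using m2(5,6) da(1) hd_in_set by fastforce
    then have a2: "A2 \<in> set (DA (S m'))" "A2 \<noteq> hd (DA (S m'))"
      using set_tl_iff2[of "DA (S m')" A2] W(1) by auto
    have "A2 \<le> hd (DA (S m'))" using hdmax[OF W(3) a2(1)] .
    moreover have "hd (DA (S m')) < A2" using m2(11) da(2) by simp
    ultimately show ?thesis by simp
  next
    assume k: "kind (S m') = 2"
    have da: "DA (S m2) = DA (S m')" "INP (S m2) = INP (S m')"
      using eq k by (simp_all add: S_Suc step_sel)
    have "\<not> L0 (S m')" using kind_facts(3)[OF k] by simp
    then have le: "hd (INP (S m2)) \<le> A2" using da m2(5,6,10) by (auto simp: L0_def)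
    have "hd (INP (S m2)) = p ! U m2" "U m2 < length p" using hd_inp[OF m2(10)] by auto
    then have "hd (INP (S m2)) \<noteq> A2" using m2(8) dist ord by (metis less_trans nat_neq_iff nth_eq_iff_index_eq)
    then show ?thesis using le alpha by simp
  qed
qed

lemma alpha_P1: assumes "hd (INP (S m2)) < A2"
  shows "\<exists>jz. q2 < jz \<and> jz < q3 \<and> p ! jz < A1"
proof -
  define jz where "jz = U m2"
  have hv: "hd (INP (S m2)) = p ! jz" "jz < length p" using hd_inp[OF m2(10)] jz_def by auto
  have j1: "q2 < jz" "jz \<le> q3" using m2(8,9) jz_def by auto
  have "jz \<noteq> q3" using assms hv vals by auto
  then have j2: "jz < q3" using j1 by simp
  have "\<not> A1 < p ! jz"
  proof
    assume gt: "A1 < p ! jz"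
    obtain \<tau>v where tv: "\<tau>v < T" "rk \<tau>v (p!jz) = 0" "rk (Suc \<tau>v) (p!jz) = 1"
      "DA (S (Suc \<tau>v)) = p!jz # DA (S \<tau>v)"
      using read_time2[OF hv(2)] by blast
    have "rk m2 (p!jz) = 0" using unread[of jz m2] hv(2) jz_def by simp
    then have a: "m2 \<le> \<tau>v" using rk_mono[of "Suc \<tau>v" m2 "p!jz"] tv(3) by (cases "Suc \<tau>v \<le> m2") auto
    have "rk \<tau>1 (p!jz) \<noteq> 0" using read_before[OF t1(5), of jz] j2 ord by simp
    then have b: "\<tau>v < \<tau>1" using rk_mono[of \<tau>1 \<tau>v "p!jz"] tv(2) by (cases "\<tau>1 \<le> \<tau>v") auto
    have "A2 \<in> set (DB (S (Suc \<tau>v)))" using m2(7)[of "Suc \<tau>v"] a b by simp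
    moreover have "p!jz \<in> set (DA (S (Suc \<tau>v)))" using tv(4) by simp
    ultimately show False using block1[of "Suc \<tau>v" "p!jz" A2] b assms hv gt A2_DB by simp
  qed
  moreover have "p ! jz \<noteq> A1" using dist hv(2) ord j2 by (metis less_trans nat_neq_iff nth_eq_iff_index_eq)
  ultimately show ?thesis using j1 j2 by (intro exI[of _ jz]) simp
qed

end



context run begin

lemma pinj: "j < length p \<Longrightarrow> j' < length p \<Longrightarrow> p!j = p!j' \<longleftrightarrow> j = j'"
  using dist by (simp add: nth_eq_iff_index_eq)

lemma rk_INP: "e \<in> set (INP (S t)) \<Longrightarrow> rk t e = 0"
  using rank_iff(1)[OF Wf_S, of e t] inP[of e t] by blast
lemma rk_DA: "e \<in> set (DA (S t)) \<Longrightarrow> rk t e = 1"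
  using rank_iff(2)[OF Wf_S, of e t] inP[of e t] by blast
lemma rk_DB: "e \<in> set (DB (S t)) \<Longrightarrow> rk t e = 2"
  using rank_iff(3)[OF Wf_S, of e t] inP[of e t] by blast
lemma rk_II: "e \<in> set (II (S t)) \<Longrightarrow> rk t e = 3"
  using rank_iff(4)[OF Wf_S, of e t] inP[of e t] by blast

lemma idx: "e \<in> set p \<Longrightarrow> \<exists>j. j < length p \<and> e = p ! j"
  by (metis in_set_conv_nth)

end

locale occ5b = occ5m +
  fixes r2 :: nat
  assumes r: "r2 < m2" "kind (S r2) = 0" "hd (INP (S r2)) = A2" "U r2 = q2"
     "DB (S r2) = DB (S m2)" "DA (S m2) = A2 # DA (S r2)"
begin

lemma hAB: "e \<in> set (DA (S r2)) \<or> e \<in> set (DB (S r2)) \<Longrightarrow> e < A2"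
proof -
  assume a: "e \<in> set (DA (S r2)) \<or> e \<in> set (DB (S r2))"
  have hA: "DA (S r2) = [] \<or> hd (DA (S r2)) < A2" using kind_facts(1)[OF r(2)] r(3) by (simp add: L0_def)
  have hB: "DB (S r2) = [] \<or> hd (DB (S r2)) < A2" using m2(11) r(5) by simp
  show "e < A2"
  proof (cases "e \<in> set (DA (S r2))")
    case True
    then have "e \<le> hd (DA (S r2))" "DA (S r2) \<noteq> []" using hdmax[OF Wf_sel(3)[OF Wf_S]] by auto
    then show ?thesis using hA by simp
  next
    case False
    then have "e \<in> set (DB (S r2))" using a by simp
    then have "e \<le> hd (DB (S r2))" "DB (S r2) \<noteq> []" using hdmax[OF Wf_sel(4)[OF Wf_S]] by auto
    then show ?thesis using hB by simp
  qed
qed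

lemma r2T: "r2 < T" "r2 < \<tau>1" using r(1) m2(3) t1(1) by auto

lemma rkA1_r2: "rk r2 A1 = 0" using unread[of q1 r2] r(4) ord by simp

lemma rkA5_r2: "rk r2 A5 = 3"
proof -
  have n0: "rk r2 A5 \<noteq> 0" using read_before[OF r(4)] ord by simp
  have n4: "rk r2 A5 \<noteq> 4" using not_out[of r2 A5 A1] r2T inps rkA1_r2 vals by simp
  have n1: "rk r2 A5 \<noteq> 1"
  proof
    assume "rk r2 A5 = 1"
    then have "A5 \<in> set (DA (S r2))" using rank_iff(2)[OF Wf_S inps(5)] by simp
    then show False using hAB[of A5] vals by simp
  qed
  have n2: "rk r2 A5 \<noteq> 2"
  proof
    assume "rk r2 A5 = 2"
    then have "A5 \<in> set (DB (S r2))" using rank_iff(3)[OF Wf_S inps(5)] by simp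
    then show False using hAB[of A5] vals by simp
  qed
  show ?thesis using n0 n1 n2 n4 rank_le4[of "S r2" A5] by linarith
qed

lemma stage_ms:
  obtains ms where "ms < r2" "kind (S ms) = 2" "\<And>\<sigma>. ms < \<sigma> \<Longrightarrow> \<sigma> < r2 \<Longrightarrow> kind (S \<sigma>) \<noteq> 2"
    "rk ms A5 \<noteq> 0"
proof -
  obtain m5 where m5: "m5 < r2" "rk m5 A5 = 2" "rk (Suc m5) A5 = 3"
    using ivt[of 0 A5 2 r2] rk_0[OF inps(5)] rkA5_r2 by auto
  have k5: "kind (S m5) = 2" using mover_of[of m5 A5] m5 by simp
  obtain ms where ms: "m5 \<le> ms" "ms < r2" "kind (S ms) = 2"
     "\<forall>\<sigma>. ms < \<sigma> \<longrightarrow> \<sigma> < r2 \<longrightarrow> kind (S \<sigma>) \<noteq> 2"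
    using last_before[of "\<lambda>\<sigma>. kind (S \<sigma>) = 2" m5 r2] k5 m5(1) by auto
  have "rk ms A5 \<noteq> 0" using rk_mono[of m5 ms A5] ms(1) m5(2) by simp
  then show ?thesis using that[of ms] ms by blast
qed

end

locale occ5s = occ5b +
  fixes ms :: nat
  assumes ms: "ms < r2" "kind (S ms) = 2" "\<And>\<sigma>. ms < \<sigma> \<Longrightarrow> \<sigma> < r2 \<Longrightarrow> kind (S \<sigma>) \<noteq> 2"
    "rk ms A5 \<noteq> 0"
begin

lemma msT: "ms < T" "ms < m2" "ms < \<tau>1" using ms(1) r2T r(1) by auto

lemma rkA2_ms: "rk ms A2 = 0"
proof -
  have "rk r2 A2 = 0" using rk_INP[of A2 r2] r(3) kind_facts(1)[OF r(2)] hd_in_set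
    by (metis L0_def)
  then show ?thesis using rk_mono[of ms r2 A2] ms(1) by simp
qed

lemma ms_facts: "INP (S ms) \<noteq> []" "DA (S ms) \<noteq> []" "DB (S ms) \<noteq> []"
  "hd (INP (S ms)) < hd (DA (S ms))" "hd (DA (S ms)) < hd (DB (S ms))"
proof -
  show ne: "INP (S ms) \<noteq> []" using rkA2_ms rank_iff(1)[OF Wf_S inps(2), of ms] by auto
  have k: "\<not> L0 (S ms)" "\<not> L1 (S ms)" using kind_facts(3)[OF ms(2)] by auto
  show da: "DA (S ms) \<noteq> []" using k(1) ne by (auto simp: L0_def)
  show db: "DB (S ms) \<noteq> []" using k(2) da by (auto simp: L1_def)
  have le1: "hd (INP (S ms)) \<le> hd (DA (S ms))" using k(1) ne da by (auto simp: L0_def)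
  have le2: "hd (DA (S ms)) \<le> hd (DB (S ms))" using k(2) da db by (auto simp: L1_def)
  have r0: "rk ms (hd (INP (S ms))) = 0" using rk_INP ne hd_in_set by blast
  have r1: "rk ms (hd (DA (S ms))) = 1" using rk_DA da hd_in_set by blast
  have r2': "rk ms (hd (DB (S ms))) = 2" using rk_DB db hd_in_set by blast
  show "hd (INP (S ms)) < hd (DA (S ms))" using le1 r0 r1 by (cases "hd (INP (S ms)) = hd (DA (S ms))") auto
  show "hd (DA (S ms)) < hd (DB (S ms))" using le2 r1 r2' by (cases "hd (DA (S ms)) = hd (DB (S ms))") auto
qed

definition jv where "jv = U ms"
definition y where "y = hd (DA (S ms))"

abbreviation "v \<equiv> p ! jv"

lemma v_facts: "hd (INP (S ms)) = v" "jv < length p" "v < y" "jv \<le> q2" "q5 < jv"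
proof -
  show "hd (INP (S ms)) = v" "jv < length p" using hd_inp[OF ms_facts(1)] jv_def by auto
  then show "v < y" using ms_facts(4) y_def by simp
  show "jv \<le> q2" using unread[of q2 ms] rkA2_ms ord jv_def by simp
  show "q5 < jv" using unread[of q5 ms] ms(4) ord jv_def by simp
qed

lemma y_in: "y \<in> set (DA (S ms))" "rk ms y = 1" "y \<in> set p"
proof -
  show yd: "y \<in> set (DA (S ms))" using hd_in_set[OF ms_facts(2)] unfolding y_def .
  show "rk ms y = 1" by (rule rk_DA[OF yd])
  show "y \<in> set p" by (rule inP[of _ ms]) (simp add: yd)
qed

lemma y_idx: obtains jy where "jy < length p" "y = p ! jy" "jy < jv"
proof -
  obtain jy where j: "jy < length p" "y = p ! jy" using idx[OF y_in(3)] by blast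
  have "\<not> U ms \<le> jy" using unread[of jy ms] j y_in(2) by simp
  then have "jy < jv" unfolding jv_def by simp
  then show ?thesis by (rule that[OF j])
qed

lemma y_r2: "rk r2 y = 1 \<or> rk r2 y = 2" "y < A2"
proof -
  have a: "y \<in> set (DA (S (Suc ms)))" using y_in(1) ms(2) by (simp add: S_Suc step_sel)
  have "rk r2 y \<le> 2"
    using no2[of "Suc ms" r2 y] ms(1,3) rk_DA[OF a] by simp
  moreover have "rk r2 y \<ge> 1" using rk_mono[of ms r2 y] ms(1) y_in(2) by simp
  ultimately show r: "rk r2 y = 1 \<or> rk r2 y = 2" by linarith
  then have "y \<in> set (DA (S r2)) \<or> y \<in> set (DB (S r2))" using rank_iff(2,3)[OF Wf_S y_in(3)] by auto
  then show "y < A2" using hAB by blast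
qed

lemma jv_lt: "jv < q2"
proof -
  have "v \<noteq> A2" using v_facts(3) y_r2(2) by simp
  then have "jv \<noteq> q2" by blast
  then show ?thesis using v_facts(4) by simp
qed

lemma v_y_r2: "v \<in> set (DA (S r2)) \<and> rk r2 y = 2"
proof -
  obtain \<tau>v where tv: "\<tau>v < T" "rk \<tau>v v = 0" "rk (Suc \<tau>v) v = 1" "kind (S \<tau>v) = 0"
     "DA (S (Suc \<tau>v)) = v # DA (S \<tau>v)" "DA (S \<tau>v) = [] \<or> hd (DA (S \<tau>v)) < v"
    using read_time2[OF v_facts(2)] by blast
  have "rk ms v = 0" using rk_INP v_facts(1) ms_facts(1) hd_in_set by metis
  then have "ms \<le> \<tau>v" using rk_mono[of "Suc \<tau>v" ms v] tv(3) by (cases "Suc \<tau>v \<le> ms") auto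
  moreover have "ms \<noteq> \<tau>v" using ms(2) tv(4) by auto
  ultimately have a: "ms < \<tau>v" by simp
  have "rk r2 v \<noteq> 0" using read_before[OF r(4) jv_lt] .
  then have b: "\<tau>v < r2" using rk_mono[of r2 \<tau>v v] tv(2) by (cases "r2 \<le> \<tau>v") auto
  have ys: "y \<in> set (DA (S (Suc ms)))" using y_in(1) ms(2) by (simp add: S_Suc step_sel)
  have yle: "rk \<tau>v y \<le> 2" using no2[of "Suc ms" \<tau>v y] ms(3) a b rk_DA[OF ys] by simp
  have yge: "rk \<tau>v y \<ge> 1" using rk_mono[of ms \<tau>v y] a y_in(2) by simp
  have "rk \<tau>v y \<noteq> 1"
  proof
    assume "rk \<tau>v y = 1"
    then have "y \<in> set (DA (S \<tau>v))" using rank_iff(2)[OF Wf_S y_in(3)] by simp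
    then have "y \<le> hd (DA (S \<tau>v))" "DA (S \<tau>v) \<noteq> []" using hdmax[OF Wf_sel(3)[OF Wf_S]] by auto
    then show False using tv(6) v_facts(3) by simp
  qed
  then have y2: "rk \<tau>v y = 2" using yle yge by simp
  have y2r: "rk r2 y \<le> 2" using y_r2(1) by auto
  have "rk r2 y = 2" using rk_mono[of \<tau>v r2 y] b y2 y2r by simp
  moreover have "v \<in> set (DA (S r2))"
  proof (rule inv_range[of "\<lambda>\<sigma>. v \<in> set (DA (S \<sigma>))" "Suc \<tau>v" r2 r2])
    fix \<sigma> assume s: "Suc \<tau>v \<le> \<sigma>" "\<sigma> < r2" "v \<in> set (DA (S \<sigma>))"
    have "rk \<sigma> y = 2" using rk_mono[of \<tau>v \<sigma> y] rk_mono[of \<sigma> r2 y] s y2 y2r by simp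
    then have "y \<in> set (DB (S \<sigma>))" using rank_iff(3)[OF Wf_S y_in(3)] by simp
    then show "v \<in> set (DA (S (Suc \<sigma>)))" using stayDA[OF Wf_S s(3) _ v_facts(3)] by (simp add: S_Suc)
  qed (use tv(5) b in auto)
  ultimately show ?thesis by simp
qed

lemma v_DA_r2: "v \<in> set (DA (S r2))" and y_rk_r2: "rk r2 y = 2" using v_y_r2 by auto

lemma v_m2: "v \<in> set (DA (S (Suc m2)))" "A2 \<in> set (DB (S (Suc m2)))" "Suc m2 \<le> \<tau>1"
  using v_DA_r2 m2(12) r(6) m2(7)[of "Suc m2"] m2(3) by auto

lemma v_lt: "v < A1"
proof -
  have "jv \<noteq> q1" using jv_lt ord by simp
  then have "v \<noteq> A1" using pinj[of jv q1] v_facts(2) ord by simp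
  moreover have "\<not> A1 < v"
    using block1[of "Suc m2" v A2] v_m2 v_facts(3) y_r2(2) A2_DB by auto
  ultimately show ?thesis by simp
qed

end



context occ5s begin

lemma g_exists: assumes jy: "jy < length p" "y = p ! jy" "jy < q5"
  shows "\<exists>jg. jg < jy \<and> A4 < p ! jg"
proof -
  obtain \<tau>y where ty: "\<tau>y < T" "rk \<tau>y y = 0" "rk (Suc \<tau>y) y = 1" "kind (S \<tau>y) = 0"
     "U \<tau>y = jy" "DA (S (Suc \<tau>y)) = y # DA (S \<tau>y)" "DB (S (Suc \<tau>y)) = DB (S \<tau>y)"
    using read_time2[OF jy(1)] jy(2) by metis
  have "\<not> ms \<le> \<tau>y" using rk_mono[of ms \<tau>y y] y_in(2) ty(2) by auto
  then have tyms: "Suc \<tau>y \<le> ms" by simp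
  have C: "DB (S \<tau>y) \<noteq> [] \<and> y < hd (DB (S \<tau>y))"
  proof (rule ccontr)
    assume nC: "\<not> (DB (S \<tau>y) \<noteq> [] \<and> y < hd (DB (S \<tau>y)))"
    have hne: "hd (DB (S \<tau>y)) \<noteq> y" if ne: "DB (S \<tau>y) \<noteq> []"
    proof -
      have r: "rk \<tau>y (hd (DB (S \<tau>y))) = 2" using rk_DB hd_in_set[OF ne] by blast
      show ?thesis
      proof
        assume "hd (DB (S \<tau>y)) = y"
        then show False using r ty(2) by simp
      qed
    qed
    have "DB (S \<tau>y) = [] \<or> hd (DB (S \<tau>y)) < y"
    proof (cases "DB (S \<tau>y) = []")
      case False
      then have "hd (DB (S \<tau>y)) \<noteq> y" by (rule hne)
      then show ?thesis using nC False by simp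
    qed simp
    then have L: "L1 (S (Suc \<tau>y))" using ty(6,7) by (simp add: L1_def)
    define K where "K \<sigma> = ((DA (S \<sigma>) \<noteq> [] \<and> hd (DA (S \<sigma>)) = y \<and> L1 (S \<sigma>)) \<or> 2 \<le> rk \<sigma> y)" for \<sigma>
    have "K ms"
    proof (rule inv_range[of K "Suc \<tau>y" ms ms])
      show "K (Suc \<tau>y)" using L ty(6) by (simp add: K_def)
    next
      fix \<sigma> assume s: "Suc \<tau>y \<le> \<sigma>" "\<sigma> < ms" "K \<sigma>"
      show "K (Suc \<sigma>)"
      proof (cases "2 \<le> rk \<sigma> y")
        case True then show ?thesis using rk_mono[of \<sigma> "Suc \<sigma>" y] by (simp add: K_def)
      next
        case False
        then have f: "DA (S \<sigma>) \<noteq> []" "hd (DA (S \<sigma>)) = y" "L1 (S \<sigma>)" using s(3) by (auto simp: K_def)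
        have "kind (S \<sigma>) = 1 \<or> kind (S \<sigma>) = 3" using kind_facts(6)[OF f(3)] .
        then show ?thesis
        proof
          assume k: "kind (S \<sigma>) = 1"
          have "rk \<sigma> y = 1" using rk_DA[of y \<sigma>] f(1,2) hd_in_set by fastforce
          moreover have "mover (S \<sigma>) = y" using mover_eq(2)[OF k] f(2) by simp
          ultimately have "rk (Suc \<sigma>) y = 2" using rank_step(1)[OF Wf_S, of \<sigma> y] k by (simp add: S_Suc)
          then show ?thesis by (simp add: K_def)
        next
          assume k: "kind (S \<sigma>) = 3"
          have "DA (S (Suc \<sigma>)) = DA (S \<sigma>)" "DB (S (Suc \<sigma>)) = DB (S \<sigma>)" using k by (simp_all add: S_Suc step_sel)
          then show ?thesis using f by (simp add: K_def L1_def)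
        qed
      qed
    qed (use tyms in auto)
    then show False using kind_facts(3)[OF ms(2)] y_in(2) by (simp add: K_def)
  qed
  define g where "g = hd (DB (S \<tau>y))"
  have gin: "g \<in> set (DB (S \<tau>y))" using C hd_in_set g_def by simp
  have gp: "g \<in> set p" by (rule inP[of _ \<tau>y]) (simp add: gin)
  obtain jg where jg: "jg < length p" "g = p ! jg" using idx[OF gp] by blast
  have "rk \<tau>y g = 2" using rk_DB[OF gin] .
  then have "\<not> U \<tau>y \<le> jg" using unread[of jg \<tau>y] jg by simp
  then have jgy: "jg < jy" using ty(5) by simp
  have yg: "y < g" using C g_def by simp
  have g2: "rk (Suc \<tau>y) g = 2" using rk_DB[of g "Suc \<tau>y"] ty(7) gin by simp
  obtain \<sigma>y where sy: "Suc \<tau>y \<le> \<sigma>y" "\<sigma>y < r2" "rk \<sigma>y y = 1" "rk (Suc \<sigma>y) y = 2"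
    using ivt[of "Suc \<tau>y" y 1 r2] ty(3) y_rk_r2 by auto
  have ky: "kind (S \<sigma>y) = 1" "mover (S \<sigma>y) = y" using mover_of[of \<sigma>y y] sy(3,4) by auto
  have Ly: "DB (S \<sigma>y) = [] \<or> hd (DB (S \<sigma>y)) < y"
    using kind_facts(2)[OF ky(1)] mover_eq(2)[OF ky(1)] ky(2) by (simp add: L1_def)
  have "rk \<sigma>y g \<noteq> 2"
  proof
    assume "rk \<sigma>y g = 2"
    then have "g \<in> set (DB (S \<sigma>y))" using rank_iff(3)[OF Wf_S gp] by simp
    then have "g \<le> hd (DB (S \<sigma>y))" "DB (S \<sigma>y) \<noteq> []" using hdmax[OF Wf_sel(4)[OF Wf_S]] by auto
    then show False using Ly yg by simp
  qed
  moreover have "rk \<sigma>y g \<ge> 2" using rk_mono[of "Suc \<tau>y" \<sigma>y g] sy(1) g2 by simp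
  ultimately have "rk \<sigma>y g \<ge> 3" by simp
  moreover have "\<sigma>y \<le> Suc m2" using sy(2) r(1) by simp
  ultimately have g3: "rk (Suc m2) g \<ge> 3" using rk_mono[of \<sigma>y "Suc m2" g] by simp
  have vp: "v \<in> set p" using v_facts(2) by simp
  have sm2T: "Suc m2 \<le> T" using v_m2(3) t1(1) by simp
  have "rk (Suc m2) v = 1" using rk_DA v_m2(1) by blast
  then have "rk (Suc m2) g \<noteq> 4" using not_out[OF sm2T gp vp] v_facts(3) yg by simp
  then have "rk (Suc m2) g = 3" using g3 rank_le4[of "S (Suc m2)" g] by simp
  then have gII: "g \<in> set (II (S (Suc m2)))" using rank_iff(4)[OF Wf_S gp] by simp
  have "jg \<noteq> q2" using jgy jy(3) ord by simp
  then have "g \<noteq> A2" using pinj[of jg q2] jg ord by simp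
  moreover have "\<not> g < A2"
  proof
    assume "g < A2"
    then have "DeadCfg g v A2 (S (Suc m2))"
      using gII v_m2(1,2) v_facts(3) yg unfolding DeadCfg_def by simp
    then show False by (rule dead[OF sm2T])
  qed
  ultimately have gA2: "A2 < g" by simp
  have "jg \<noteq> q4" using jgy jy(3) ord by simp
  then have "g \<noteq> A4" using pinj[of jg q4] jg ord by simp
  moreover have "\<not> g < A4"
  proof
    assume gA4: "g < A4"
    have r3: "rk \<tau>1 g \<ge> 3" using rk_mono[of "Suc m2" \<tau>1 g] v_m2(3) g3 by simp
    have "rk \<tau>1 g \<noteq> 4" using not_out[of \<tau>1 g A1] t1(1,2) gp inps(1) gA2 vals(1) by simp
    then have "rk \<tau>1 g = 3" using r3 rank_le4[of "S \<tau>1" g] by simp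
    then have "g \<in> set (II (S \<tau>1))" using rank_iff(4)[OF Wf_S gp] by simp
    then show False using fail1[of g] gA2 gA4 vals(1) by simp
  qed
  ultimately have "A4 < g" by simp
  then have "jg < jy \<and> A4 < p ! jg" using jgy jg(2) by simp
  then show ?thesis by (rule exI[of _ jg])
qed

lemma beta_pat:
  "(\<exists>jy jv. q5 < jy \<and> jy < jv \<and> jv < q2 \<and> p!jv < A1 \<and> p!jv < p!jy \<and> p!jy < A2) \<or>
   (\<exists>jg jy jv. jg < jy \<and> jy < q5 \<and> q5 < jv \<and> jv < q2 \<and> p!jv < A1 \<and> p!jv < p!jy \<and> p!jy < A2 \<and> A4 < p!jg)"
proof -
  obtain jy where jy: "jy < length p" "y = p ! jy" "jy < jv" by (rule y_idx)
  have base: "jv < q2" "v < A1" "v < y" "y < A2" "q5 < jv"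
    using jv_lt v_lt v_facts(3,5) y_r2(2) by auto
  have "jy \<noteq> q5"
  proof
    assume "jy = q5" then have "y = A5" using jy by simp
    then show False using base(4) vals by simp
  qed
  then consider "q5 < jy" | "jy < q5" by linarith
  then show ?thesis
  proof cases
    case 1
    have "q5 < jy \<and> jy < jv \<and> jv < q2 \<and> p!jv < A1 \<and> p!jv < p!jy \<and> p!jy < A2"
      using 1 jy(2,3) base by simp
    then show ?thesis by (intro disjI1 exI)
  next
    case 2
    obtain jg where jg: "jg < jy" "A4 < p ! jg" using g_exists[OF jy(1,2) 2] by blast
    have "jg < jy \<and> jy < q5 \<and> q5 < jv \<and> jv < q2 \<and> p!jv < A1 \<and> p!jv < p!jy \<and> p!jy < A2 \<and> A4 < p!jg"
      using jg 2 jy(2) base by simp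
    then show ?thesis by (intro disjI2 exI)
  qed
qed

end



lemma ext1:
  fixes p :: "nat list"
  assumes o: "sorted_wrt (<) [q5,q2,jz,q3,q1,q4]" "\<forall>j\<in>set [q5,q2,jz,q3,q1,q4]. j < length p"
    and v: "p!jz < p!q1" "p!q1 < p!q2" "p!q2 < p!q3" "p!q3 < p!q4" "p!q4 < p!q5"
  shows "extends_to p [q5,q2,q3,q1,q4] ([6,3,1,4,2,5],[0,1,3,4,5])"
proof -
  have "occurrence p [6,3,1,4,2,5] [q5,q2,jz,q3,q1,q4]"
    unfolding occurrence_def using o v
    by (simp add: All_less_Suc numeral_eq_Suc) linarith?
  then show ?thesis unfolding extends_to_def by (intro exI[of _ "[q5,q2,jz,q3,q1,q4]"]) simp
qed

lemma ext2:
  fixes p :: "nat list"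
  assumes o: "sorted_wrt (<) [q5,jy,jv,q2,q3,q1,q4]" "\<forall>j\<in>set [q5,jy,jv,q2,q3,q1,q4]. j < length p"
    and v: "p!jv < p!jy" "p!jy < p!q1" "p!q1 < p!q2" "p!q2 < p!q3" "p!q3 < p!q4" "p!q4 < p!q5"
  shows "extends_to p [q5,q2,q3,q1,q4] ([7,2,1,4,5,3,6],[0,3,4,5,6])"
proof -
  have "occurrence p [7,2,1,4,5,3,6] [q5,jy,jv,q2,q3,q1,q4]"
    unfolding occurrence_def using o v
    by (simp add: All_less_Suc numeral_eq_Suc) linarith?
  then show ?thesis unfolding extends_to_def by (intro exI[of _ "[q5,jy,jv,q2,q3,q1,q4]"]) simp
qed

lemma ext3:
  fixes p :: "nat list"
  assumes o: "sorted_wrt (<) [q5,jy,jv,q2,q3,q1,q4]" "\<forall>j\<in>set [q5,jy,jv,q2,q3,q1,q4]. j < length p"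
    and v: "p!jv < p!q1" "p!q1 < p!jy" "p!jy < p!q2" "p!q2 < p!q3" "p!q3 < p!q4" "p!q4 < p!q5"
  shows "extends_to p [q5,q2,q3,q1,q4] ([7,3,1,4,5,2,6],[0,3,4,5,6])"
proof -
  have "occurrence p [7,3,1,4,5,2,6] [q5,jy,jv,q2,q3,q1,q4]"
    unfolding occurrence_def using o v
    by (simp add: All_less_Suc numeral_eq_Suc) linarith?
  then show ?thesis unfolding extends_to_def by (intro exI[of _ "[q5,jy,jv,q2,q3,q1,q4]"]) simp
qed

lemma ext4:
  fixes p :: "nat list"
  assumes o: "sorted_wrt (<) [jg,jy,q5,jv,q2,q3,q1,q4]" "\<forall>j\<in>set [jg,jy,q5,jv,q2,q3,q1,q4]. j < length p"
    and v: "p!jv < p!jy" "p!jy < p!q1" "p!q1 < p!q2" "p!q2 < p!q3" "p!q3 < p!q4" "p!q4 < p!jg" "p!jg < p!q5"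
  shows "extends_to p [q5,q2,q3,q1,q4] ([7,2,8,1,4,5,3,6],[2,4,5,6,7])"
proof -
  have "occurrence p [7,2,8,1,4,5,3,6] [jg,jy,q5,jv,q2,q3,q1,q4]"
    unfolding occurrence_def using o v
    by (simp add: All_less_Suc numeral_eq_Suc) linarith?
  then show ?thesis unfolding extends_to_def by (intro exI[of _ "[jg,jy,q5,jv,q2,q3,q1,q4]"]) simp
qed

lemma ext5:
  fixes p :: "nat list"
  assumes o: "sorted_wrt (<) [jg,jy,q5,jv,q2,q3,q1,q4]" "\<forall>j\<in>set [jg,jy,q5,jv,q2,q3,q1,q4]. j < length p"
    and v: "p!jv < p!q1" "p!q1 < p!jy" "p!jy < p!q2" "p!q2 < p!q3" "p!q3 < p!q4" "p!q4 < p!jg" "p!jg < p!q5"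
  shows "extends_to p [q5,q2,q3,q1,q4] ([7,3,8,1,4,5,2,6],[2,4,5,6,7])"
proof -
  have "occurrence p [7,3,8,1,4,5,2,6] [jg,jy,q5,jv,q2,q3,q1,q4]"
    unfolding occurrence_def using o v
    by (simp add: All_less_Suc numeral_eq_Suc) linarith?
  then show ?thesis unfolding extends_to_def by (intro exI[of _ "[jg,jy,q5,jv,q2,q3,q1,q4]"]) simp
qed

lemma ext6:
  fixes p :: "nat list"
  assumes o: "sorted_wrt (<) [jg,jy,q5,jv,q2,q3,q1,q4]" "\<forall>j\<in>set [jg,jy,q5,jv,q2,q3,q1,q4]. j < length p"
    and v: "p!jv < p!jy" "p!jy < p!q1" "p!q1 < p!q2" "p!q2 < p!q3" "p!q3 < p!q4" "p!q4 < p!q5" "p!q5 < p!jg"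
  shows "extends_to p [q5,q2,q3,q1,q4] ([8,2,7,1,4,5,3,6],[2,4,5,6,7])"
proof -
  have "occurrence p [8,2,7,1,4,5,3,6] [jg,jy,q5,jv,q2,q3,q1,q4]"
    unfolding occurrence_def using o v
    by (simp add: All_less_Suc numeral_eq_Suc) linarith?
  then show ?thesis unfolding extends_to_def by (intro exI[of _ "[jg,jy,q5,jv,q2,q3,q1,q4]"]) simp
qed

lemma ext7:
  fixes p :: "nat list"
  assumes o: "sorted_wrt (<) [jg,jy,q5,jv,q2,q3,q1,q4]" "\<forall>j\<in>set [jg,jy,q5,jv,q2,q3,q1,q4]. j < length p"
    and v: "p!jv < p!q1" "p!q1 < p!jy" "p!jy < p!q2" "p!q2 < p!q3" "p!q3 < p!q4" "p!q4 < p!q5" "p!q5 < p!jg"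
  shows "extends_to p [q5,q2,q3,q1,q4] ([8,3,7,1,4,5,2,6],[2,4,5,6,7])"
proof -
  have "occurrence p [8,3,7,1,4,5,2,6] [jg,jy,q5,jv,q2,q3,q1,q4]"
    unfolding occurrence_def using o v
    by (simp add: All_less_Suc numeral_eq_Suc) linarith?
  then show ?thesis unfolding extends_to_def by (intro exI[of _ "[jg,jy,q5,jv,q2,q3,q1,q4]"]) simp
qed


lemma len5: "length xs = 5 \<Longrightarrow> \<exists>a b c d e. xs = [a,b,c,d,e]"
  by (auto simp: numeral_eq_Suc length_Suc_conv)

lemma occ5_extract: assumes "occurrence p [5,2,3,1,4] js"
  obtains q5 q2 q3 q1 q4 where "js = [q5,q2,q3,q1,q4]" "q5 < q2" "q2 < q3" "q3 < q1" "q1 < q4" "q4 < length p"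
    "p!q1 < p!q2" "p!q2 < p!q3" "p!q3 < p!q4" "p!q4 < p!q5"
proof -
  have l: "length js = 5" using assms by (simp add: occurrence_def)
  then obtain q5 q2 q3 q1 q4 where js: "js = [q5,q2,q3,q1,q4]" using len5 by blast
  have A: "\<forall>a<5. \<forall>b<5. (p ! (js ! a) < p ! (js ! b)) = ([5,2,3,1,4::nat] ! a < [5,2,3,1,4] ! b)"
    using assms by (simp add: occurrence_def)
  have "p!q1 < p!q2" using A[rule_format, of 3 1] by (simp add: js)
  moreover have "p!q2 < p!q3" using A[rule_format, of 1 2] by (simp add: js)
  moreover have "p!q3 < p!q4" using A[rule_format, of 2 4] by (simp add: js)
  moreover have "p!q4 < p!q5" using A[rule_format, of 4 0] by (simp add: js)
  moreover have "q5 < q2" "q2 < q3" "q3 < q1" "q1 < q4" "q4 < length p" using assms by (auto simp: occurrence_def js)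
  ultimately show ?thesis using that js by blast
qed

lemma part2: assumes srt: "qlg2_sortable p" and oc: "occurrence p [5,2,3,1,4] js"
  shows "\<exists>qU\<in>set ext_patterns. extends_to p js qU"
proof -
  interpret R: run p using srt by (simp add: run_def)
  obtain q5 q2 q3 q1 q4 where js: "js = [q5,q2,q3,q1,q4]" and ord: "q5 < q2" "q2 < q3" "q3 < q1" "q1 < q4" "q4 < length p"
    and vals: "p!q1 < p!q2" "p!q2 < p!q3" "p!q3 < p!q4" "p!q4 < p!q5"
    using occ5_extract[OF oc] by blast
  have q1: "q1 < length p" using ord by simp
  obtain \<tau>1 where t1: "\<tau>1 < R.T" "R.rk \<tau>1 (p!q1) = 0" "R.rk (Suc \<tau>1) (p!q1) = 1" "kind (R.S \<tau>1) = 0"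
     "hd (INP (R.S \<tau>1)) = p!q1" "R.U \<tau>1 = q1" "DA (R.S (Suc \<tau>1)) = p!q1 # DA (R.S \<tau>1)"
     "DB (R.S (Suc \<tau>1)) = DB (R.S \<tau>1)" "II (R.S (Suc \<tau>1)) = II (R.S \<tau>1)"
     "INP (R.S (Suc \<tau>1)) = drop (Suc q1) p" "DA (R.S \<tau>1) = [] \<or> hd (DA (R.S \<tau>1)) < p!q1"
    by (rule R.read_time2[OF q1])
  interpret O: occ5 p q5 q2 q3 q1 q4 \<tau>1
    unfolding occ5_def occ5_axioms_def using srt ord vals t1 by (simp add: run_def)
  have ext: "extends_to p js qU \<Longrightarrow> qU \<in> set ext_patterns \<Longrightarrow> \<exists>qU\<in>set ext_patterns. extends_to p js qU" for qU
    by blast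
  obtain \<tau>2 m2 where m2: "\<tau>2 < m2" "kind (R.S \<tau>2) = 0"
    "m2 < \<tau>1" "kind (R.S m2) = 1" "hd (DA (R.S m2)) = p!q2" "DA (R.S m2) \<noteq> []"
    "\<And>\<sigma>. Suc m2 \<le> \<sigma> \<Longrightarrow> \<sigma> \<le> \<tau>1 \<Longrightarrow> p!q2 \<in> set (DB (R.S \<sigma>))"
    "q2 < R.U m2" "R.U m2 \<le> q3" "INP (R.S m2) \<noteq> []"
    "DB (R.S m2) = [] \<or> hd (DB (R.S m2)) < p!q2"
    "DA (R.S (Suc m2)) = tl (DA (R.S m2))"
    using O.stage_m2 by blast
  interpret M: occ5m p q5 q2 q3 q1 q4 \<tau>1 m2 \<tau>2
    unfolding occ5m_def occ5m_axioms_def using O.occ5_axioms m2 by simp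
  show ?thesis
  proof (cases rule: M.stage_case)
    case alpha
    obtain jz where jz: "q2 < jz" "jz < q3" "p ! jz < p!q1" using M.alpha_P1[OF alpha] by blast
    have "extends_to p js ([6,3,1,4,2,5],[0,1,3,4,5])"
      unfolding js by (rule ext1) (use ord vals jz in auto)
    then show ?thesis by (rule ext) (simp add: ext_patterns_def)
  next
    case (beta r2)
    interpret B: occ5b p q5 q2 q3 q1 q4 \<tau>1 m2 \<tau>2 r2
      unfolding occ5b_def occ5b_axioms_def using M.occ5m_axioms beta by simp
    obtain ms where ms: "ms < r2" "kind (R.S ms) = 2" "\<And>\<sigma>. ms < \<sigma> \<Longrightarrow> \<sigma> < r2 \<Longrightarrow> kind (R.S \<sigma>) \<noteq> 2"
      "R.rk ms (p!q5) \<noteq> 0" using B.stage_ms by blast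
    interpret Z: occ5s p q5 q2 q3 q1 q4 \<tau>1 m2 \<tau>2 r2 ms
      unfolding occ5s_def occ5s_axioms_def using B.occ5b_axioms ms by simp
    from Z.beta_pat show ?thesis
    proof (elim disjE exE conjE)
      fix jy jv assume a: "q5 < jy" "jy < jv" "jv < q2" "p!jv < p!q1" "p!jv < p!jy" "p!jy < p!q2"
      show ?thesis
      proof (cases "p!jy < p!q1")
        case True
        have "extends_to p js ([7,2,1,4,5,3,6],[0,3,4,5,6])"
          unfolding js by (rule ext2) (use ord vals a True in auto)
        then show ?thesis by (rule ext) (simp add: ext_patterns_def)
      next
        case False
        then have "p!q1 < p!jy" using a(2,3) ord R.pinj[of jy q1] by (cases "p!jy = p!q1") auto
        have "extends_to p js ([7,3,1,4,5,2,6],[0,3,4,5,6])"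
          unfolding js by (rule ext3) (use ord vals a \<open>p!q1 < p!jy\<close> in auto)
        then show ?thesis by (rule ext) (simp add: ext_patterns_def)
      qed
    next
      fix jg jy jv assume a: "jg < jy" "jy < q5" "q5 < jv" "jv < q2" "p!jv < p!q1" "p!jv < p!jy"
        "p!jy < p!q2" "p!q4 < p!jg"
      have jyq1: "p!jy \<noteq> p!q1" using a ord R.pinj[of jy q1] by simp
      have jgq5: "p!jg \<noteq> p!q5" using a ord R.pinj[of jg q5] by simp
      consider "p!jy < p!q1" "p!jg < p!q5" | "p!jy < p!q1" "p!q5 < p!jg"
        | "p!q1 < p!jy" "p!jg < p!q5" | "p!q1 < p!jy" "p!q5 < p!jg"
        using jyq1 jgq5 by linarith
      then show ?thesis
      proof cases
        case 1
        have "extends_to p js ([7,2,8,1,4,5,3,6],[2,4,5,6,7])"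
          unfolding js by (rule ext4) (use ord vals a 1 in auto)
        then show ?thesis by (rule ext) (simp add: ext_patterns_def)
      next
        case 2
        have "extends_to p js ([8,2,7,1,4,5,3,6],[2,4,5,6,7])"
          unfolding js by (rule ext6) (use ord vals a 2 in auto)
        then show ?thesis by (rule ext) (simp add: ext_patterns_def)
      next
        case 3
        have "extends_to p js ([7,3,8,1,4,5,2,6],[2,4,5,6,7])"
          unfolding js by (rule ext5) (use ord vals a 3 in auto)
        then show ?thesis by (rule ext) (simp add: ext_patterns_def)
      next
        case 4
        have "extends_to p js ([8,3,7,1,4,5,2,6],[2,4,5,6,7])"
          unfolding js by (rule ext7) (use ord vals a 4 in auto)
        then show ?thesis by (rule ext) (simp add: ext_patterns_def)
      qed
    qed
  qed
qed

theorem mainTheorem13: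
  fixes p :: "nat list"
  assumes "qlg2_sortable p"
  shows "\<not> contains p [3,2,1,4]
    \<and> (\<forall>is. occurrence p [5,2,3,1,4] is \<longrightarrow> (\<exists>qU\<in>set ext_patterns. extends_to p is qU))"
proof -
  interpret R: run p using assms by (simp add: run_def)
  show ?thesis using R.part1 part2[OF assms] by blast
qed


end
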